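(* On any generalized Kac algebra $(M,\Delta,S,\phi)$ there is a unique normalized Haar trace, i.e. a unique faithful trace $\psi$ on $M$ such that $(\mathrm{id}\otimes\psi)\Delta=(\varepsilon_t\otimes\psi)\Delta$, $\psi\circ S=\psi$ and $(\mathrm{id}\otimes\psi)(\Delta(1))=1$, where $\varepsilon_t=\mu(\mathrm{id}\otimes S)\Delta$.
   Context: All algebras are finite-dimensional over $\mathbb{C}$; $\varsigma$ denotes the flip and $\mu(x\otimes y)=xy$. A generalized Kac algebra is a quadruple $(M,\Delta,S,\phi)$ where $M$ is a finite-dimensional $C^*$-algebra; $\Delta:M\to M\otimes M$ is an injective, not necessarily unital, $*$-homomorphism with $(\Delta\otimes\mathrm{id})\Delta=(\mathrm{id}\otimes\Delta)\Delta$; $S:M\to M$ is a linear, unital, antimultiplicative, $*$-preserving bijection with $S^2=\mathrm{id}$ and $(S\otimes S)\circ\Delta=\varsigma\circ\Delta\circ S$; and $\phi$ is a faithful trace on $M$ with $\phi\circ S=\phi$ and $(\mathrm{id}\otimes\phi)[(1\otimes y)\Delta(x)]=S[(\mathrm{id}\otimes\phi)(\Delta(y)(1\otimes x))]$ for all $x,y\in M$. *)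

theory Defs
  imports Complex_Main
begin

text \<open>
A finite-dimensional complex algebra M is represented in coordinates with respect to a
basis indexed by a finite type 'i: elements of M are functions 'i => complex.
Then M (x) M is represented by functions ('i * 'i) => complex (basis e_a (x) e_b),
and M (x) M (x) M by functions on triples.  All algebraic operations on tensor
products are induced from the operations on M via the basis.
\<close>

definition bvec :: "'i \<Rightarrow> 'i \<Rightarrow> complex" where
  "bvec i = (\<lambda>j. if j = i then 1 else 0)"

definition vadd :: "('i \<Rightarrow> complex) \<Rightarrow> ('i \<Rightarrow> complex) \<Rightarrow> ('i \<Rightarrow> complex)" where
  "vadd x y = (\<lambda>i. x i + y i)"

definition vscale :: "complex \<Rightarrow> ('i \<Rightarrow> complex) \<Rightarrow> ('i \<Rightarrow> complex)" where
  "vscale c x = (\<lambda>i. c * x i)"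

definition vzero :: "'i \<Rightarrow> complex" where
  "vzero = (\<lambda>_. 0)"

definition clin :: "(('a \<Rightarrow> complex) \<Rightarrow> ('b \<Rightarrow> complex)) \<Rightarrow> bool" where
  "clin f \<longleftrightarrow> (\<forall>x y c. f (vadd x y) = vadd (f x) (f y) \<and> f (vscale c x) = vscale c (f x))"

definition clin_fun :: "(('a \<Rightarrow> complex) \<Rightarrow> complex) \<Rightarrow> bool" where
  "clin_fun f \<longleftrightarrow> (\<forall>x y c. f (vadd x y) = f x + f y \<and> f (vscale c x) = c * f x)"

definition antilin :: "(('a \<Rightarrow> complex) \<Rightarrow> ('b \<Rightarrow> complex)) \<Rightarrow> bool" where
  "antilin f \<longleftrightarrow> (\<forall>x y c. f (vadd x y) = vadd (f x) (f y) \<and> f (vscale c x) = vscale (cnj c) (f x))"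

definition bilin :: "(('a \<Rightarrow> complex) \<Rightarrow> ('a \<Rightarrow> complex) \<Rightarrow> ('a \<Rightarrow> complex)) \<Rightarrow> bool" where
  "bilin m \<longleftrightarrow> (\<forall>x. clin (m x)) \<and> (\<forall>y. clin (\<lambda>x. m x y))"

definition star_algebra ::
  "(('i \<Rightarrow> complex) \<Rightarrow> ('i \<Rightarrow> complex) \<Rightarrow> ('i \<Rightarrow> complex)) \<Rightarrow> ('i \<Rightarrow> complex)
   \<Rightarrow> (('i \<Rightarrow> complex) \<Rightarrow> ('i \<Rightarrow> complex)) \<Rightarrow> bool" where
  "star_algebra mul one st \<longleftrightarrow>
     bilin mul \<and>
     (\<forall>x y z. mul (mul x y) z = mul x (mul y z)) \<and>
     (\<forall>x. mul one x = x \<and> mul x one = x) \<and>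
     antilin st \<and>
     (\<forall>x. st (st x) = x) \<and>
     (\<forall>x y. st (mul x y) = mul (st y) (st x))"

text \<open>a C*-norm (completeness is automatic in finite dimension)\<close>
definition cstar_norm ::
  "(('i \<Rightarrow> complex) \<Rightarrow> ('i \<Rightarrow> complex) \<Rightarrow> ('i \<Rightarrow> complex))
   \<Rightarrow> (('i \<Rightarrow> complex) \<Rightarrow> ('i \<Rightarrow> complex)) \<Rightarrow> (('i \<Rightarrow> complex) \<Rightarrow> real) \<Rightarrow> bool" where
  "cstar_norm mul st N \<longleftrightarrow>
     (\<forall>x. N x \<ge> 0 \<and> (N x = 0 \<longleftrightarrow> x = vzero)) \<and>
     (\<forall>c x. N (vscale c x) = cmod c * N x) \<and>
     (\<forall>x y. N (vadd x y) \<le> N x + N y) \<and>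
     (\<forall>x y. N (mul x y) \<le> N x * N y) \<and>
     (\<forall>x. N (mul (st x) x) = (N x)\<^sup>2)"

definition fd_cstar_algebra ::
  "(('i::finite \<Rightarrow> complex) \<Rightarrow> ('i \<Rightarrow> complex) \<Rightarrow> ('i \<Rightarrow> complex)) \<Rightarrow> ('i \<Rightarrow> complex)
   \<Rightarrow> (('i \<Rightarrow> complex) \<Rightarrow> ('i \<Rightarrow> complex)) \<Rightarrow> bool" where
  "fd_cstar_algebra mul one st \<longleftrightarrow> star_algebra mul one st \<and> (\<exists>N. cstar_norm mul st N)"

definition tens :: "('a \<Rightarrow> complex) \<Rightarrow> ('b \<Rightarrow> complex) \<Rightarrow> ('a \<times> 'b \<Rightarrow> complex)" where
  "tens x y = (\<lambda>(a, b). x a * y b)"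

text \<open>f (x) g for linear maps f, g\<close>
definition tmap ::
  "(('a::finite \<Rightarrow> complex) \<Rightarrow> ('b \<Rightarrow> complex)) \<Rightarrow> (('c::finite \<Rightarrow> complex) \<Rightarrow> ('d \<Rightarrow> complex))
   \<Rightarrow> ('a \<times> 'c \<Rightarrow> complex) \<Rightarrow> ('b \<times> 'd \<Rightarrow> complex)" where
  "tmap f g X = (\<lambda>(j, l). \<Sum>i\<in>UNIV. \<Sum>k\<in>UNIV. X (i, k) * f (bvec i) j * g (bvec k) l)"

text \<open>product on M (x) M: (x (x) y)(x' (x) y') = x x' (x) y y'\<close>
definition tmul ::
  "(('a::finite \<Rightarrow> complex) \<Rightarrow> ('a \<Rightarrow> complex) \<Rightarrow> ('a \<Rightarrow> complex))
   \<Rightarrow> (('b::finite \<Rightarrow> complex) \<Rightarrow> ('b \<Rightarrow> complex) \<Rightarrow> ('b \<Rightarrow> complex))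
   \<Rightarrow> ('a \<times> 'b \<Rightarrow> complex) \<Rightarrow> ('a \<times> 'b \<Rightarrow> complex) \<Rightarrow> ('a \<times> 'b \<Rightarrow> complex)" where
  "tmul m n X Y = (\<lambda>(c, d). \<Sum>a\<in>UNIV. \<Sum>b\<in>UNIV. \<Sum>a'\<in>UNIV. \<Sum>b'\<in>UNIV.
      X (a, b) * Y (a', b') * m (bvec a) (bvec a') c * n (bvec b) (bvec b') d)"

text \<open>involution on M (x) M: (x (x) y)^* = x^* (x) y^* (antilinear extension)\<close>
definition tstar ::
  "(('a::finite \<Rightarrow> complex) \<Rightarrow> ('a \<Rightarrow> complex)) \<Rightarrow> (('b::finite \<Rightarrow> complex) \<Rightarrow> ('b \<Rightarrow> complex))
   \<Rightarrow> ('a \<times> 'b \<Rightarrow> complex) \<Rightarrow> ('a \<times> 'b \<Rightarrow> complex)" where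
  "tstar s t X = (\<lambda>(j, l). \<Sum>i\<in>UNIV. \<Sum>k\<in>UNIV. cnj (X (i, k)) * s (bvec i) j * t (bvec k) l)"

definition flip :: "('a \<times> 'b \<Rightarrow> complex) \<Rightarrow> ('b \<times> 'a \<Rightarrow> complex)" where
  "flip X = (\<lambda>(a, b). X (b, a))"

definition slice :: "(('b::finite \<Rightarrow> complex) \<Rightarrow> complex) \<Rightarrow> ('a \<times> 'b \<Rightarrow> complex) \<Rightarrow> ('a \<Rightarrow> complex)" where
  "slice phi X = (\<lambda>a. \<Sum>k\<in>UNIV. X (a, k) * phi (bvec k))"

definition mu ::
  "(('i::finite \<Rightarrow> complex) \<Rightarrow> ('i \<Rightarrow> complex) \<Rightarrow> ('i \<Rightarrow> complex)) \<Rightarrow> ('i \<times> 'i \<Rightarrow> complex) \<Rightarrow> ('i \<Rightarrow> complex)" where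
  "mu m X = (\<lambda>c. \<Sum>a\<in>UNIV. \<Sum>b\<in>UNIV. X (a, b) * m (bvec a) (bvec b) c)"

definition faithful_trace ::
  "(('i \<Rightarrow> complex) \<Rightarrow> ('i \<Rightarrow> complex) \<Rightarrow> ('i \<Rightarrow> complex)) \<Rightarrow> (('i \<Rightarrow> complex) \<Rightarrow> ('i \<Rightarrow> complex))
   \<Rightarrow> (('i \<Rightarrow> complex) \<Rightarrow> complex) \<Rightarrow> bool" where
  "faithful_trace mul st phi \<longleftrightarrow>
     clin_fun phi \<and>
     (\<forall>x y. phi (mul x y) = phi (mul y x)) \<and>
     (\<forall>x. Im (phi (mul (st x) x)) = 0 \<and> Re (phi (mul (st x) x)) \<ge> 0) \<and>
     (\<forall>x. phi (mul (st x) x) = 0 \<longrightarrow> x = vzero)"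

definition gen_kac_algebra ::
  "(('i::finite \<Rightarrow> complex) \<Rightarrow> ('i \<Rightarrow> complex) \<Rightarrow> ('i \<Rightarrow> complex)) \<Rightarrow> ('i \<Rightarrow> complex)
   \<Rightarrow> (('i \<Rightarrow> complex) \<Rightarrow> ('i \<Rightarrow> complex))
   \<Rightarrow> (('i \<Rightarrow> complex) \<Rightarrow> ('i \<times> 'i \<Rightarrow> complex))
   \<Rightarrow> (('i \<Rightarrow> complex) \<Rightarrow> ('i \<Rightarrow> complex))
   \<Rightarrow> (('i \<Rightarrow> complex) \<Rightarrow> complex) \<Rightarrow> bool" where
  "gen_kac_algebra mul one st Delta S phi \<longleftrightarrow>
     fd_cstar_algebra mul one st \<and>
     \<comment> \<open>Delta: injective, not necessarily unital *-homomorphism, coassociative\<close>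
     clin Delta \<and> inj Delta \<and>
     (\<forall>x y. Delta (mul x y) = tmul mul mul (Delta x) (Delta y)) \<and>
     (\<forall>x. Delta (st x) = tstar st st (Delta x)) \<and>
     (\<forall>x a b c. tmap Delta id (Delta x) ((a, b), c) = tmap id Delta (Delta x) (a, (b, c))) \<and>
     \<comment> \<open>antipode S\<close>
     clin S \<and> S one = one \<and>
     (\<forall>x y. S (mul x y) = mul (S y) (S x)) \<and>
     (\<forall>x. S (st x) = st (S x)) \<and>
     bij S \<and> (\<forall>x. S (S x) = x) \<and>
     (\<forall>x. tmap S S (Delta x) = flip (Delta (S x))) \<and>
     \<comment> \<open>faithful trace phi\<close>
     faithful_trace mul st phi \<and>
     (\<forall>x. phi (S x) = phi x) \<and>
     (\<forall>x y. slice phi (tmul mul mul (tens one y) (Delta x))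
            = S (slice phi (tmul mul mul (Delta y) (tens one x))))"

definition eps_t ::
  "(('i::finite \<Rightarrow> complex) \<Rightarrow> ('i \<Rightarrow> complex) \<Rightarrow> ('i \<Rightarrow> complex))
   \<Rightarrow> (('i \<Rightarrow> complex) \<Rightarrow> ('i \<times> 'i \<Rightarrow> complex))
   \<Rightarrow> (('i \<Rightarrow> complex) \<Rightarrow> ('i \<Rightarrow> complex)) \<Rightarrow> ('i \<Rightarrow> complex) \<Rightarrow> ('i \<Rightarrow> complex)" where
  "eps_t mul Delta S x = mu mul (tmap id S (Delta x))"

text \<open>normalized Haar trace; (eps_t (x) psi) = (id (x) psi) o (eps_t (x) id)\<close>
definition normalized_haar_trace ::
  "(('i::finite \<Rightarrow> complex) \<Rightarrow> ('i \<Rightarrow> complex) \<Rightarrow> ('i \<Rightarrow> complex)) \<Rightarrow> ('i \<Rightarrow> complex)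
   \<Rightarrow> (('i \<Rightarrow> complex) \<Rightarrow> ('i \<Rightarrow> complex))
   \<Rightarrow> (('i \<Rightarrow> complex) \<Rightarrow> ('i \<times> 'i \<Rightarrow> complex))
   \<Rightarrow> (('i \<Rightarrow> complex) \<Rightarrow> ('i \<Rightarrow> complex))
   \<Rightarrow> (('i \<Rightarrow> complex) \<Rightarrow> complex) \<Rightarrow> bool" where
  "normalized_haar_trace mul one st Delta S psi \<longleftrightarrow>
     faithful_trace mul st psi \<and>
     (\<forall>x. slice psi (Delta x) = slice psi (tmap (eps_t mul Delta S) id (Delta x))) \<and>
     (\<forall>x. psi (S x) = psi x) \<and>
     slice psi (Delta one) = one"

end

theory Submission
  imports Defs "HOL-Analysis.Analysis"
begin


lemma bvec_sum1 [simp]: "(\<Sum>i\<in>UNIV. bvec i (a::'a::finite) * f i) = (f a :: complex)"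
  unfolding bvec_def by (simp add: eq_commute[of a] if_distrib[of "\<lambda>x. x * _"] cong: if_cong)
lemma bvec_sum2 [simp]: "(\<Sum>i\<in>UNIV. f i * bvec i (a::'a::finite)) = (f a :: complex)"
  unfolding bvec_def by (simp add: eq_commute[of a] if_distrib[of "\<lambda>x. _ * x"] cong: if_cong)
lemma bvec_sum3 [simp]: "(\<Sum>i\<in>UNIV. bvec (a::'a::finite) i * f i) = (f a :: complex)"
  unfolding bvec_def by (simp add: if_distrib[of "\<lambda>x. x * _"] cong: if_cong)
lemma bvec_sum4 [simp]: "(\<Sum>i\<in>UNIV. f i * bvec (a::'a::finite) i) = (f a :: complex)"
  unfolding bvec_def by (simp add: if_distrib[of "\<lambda>x. _ * x"] cong: if_cong)
lemma vec_expand: "(\<lambda>j. \<Sum>i\<in>UNIV. x i * bvec i j) = (x :: 'a::finite \<Rightarrow> complex)"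
  by auto

lemma clin_add: "clin f \<Longrightarrow> f (vadd x y) = vadd (f x) (f y)" by (simp add: clin_def)
lemma clin_scale: "clin f \<Longrightarrow> f (vscale c x) = vscale c (f x)" by (simp add: clin_def)
lemma clin_zero: "clin f \<Longrightarrow> f (\<lambda>_. 0) = (\<lambda>_. 0)"
proof -
  assume f: "clin f"
  have "f (\<lambda>_. 0) = f (vscale 0 (\<lambda>_. 0))" by (simp add: vscale_def)
  also have "\<dots> = vscale 0 (f (\<lambda>_. 0))" using clin_scale[OF f] by blast
  finally show ?thesis by (simp add: vscale_def)
qed

lemma clin_sum_set:
  assumes f: "clin f" and A: "finite A"
  shows "f (\<lambda>j. \<Sum>i\<in>A. x i * bvec i j) = (\<lambda>j. \<Sum>i\<in>A. x i * f (bvec i) j)"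
  using A
proof (induction A rule: finite_induct)
  case empty then show ?case using clin_zero[OF f] by simp
next
  case (insert a A)
  have "(\<lambda>j. \<Sum>i\<in>insert a A. x i * bvec i j) = vadd (vscale (x a) (bvec a)) (\<lambda>j. \<Sum>i\<in>A. x i * bvec i j)"
    using insert by (simp add: vadd_def vscale_def)
  then have "f (\<lambda>j. \<Sum>i\<in>insert a A. x i * bvec i j) = vadd (vscale (x a) (f (bvec a))) (\<lambda>j. \<Sum>i\<in>A. x i * f (bvec i) j)"
    using insert clin_add[OF f] clin_scale[OF f] by simp
  then show ?case using insert by (simp add: vadd_def vscale_def)
qed

lemma clin_expand:
  fixes f :: "('a::finite \<Rightarrow> complex) \<Rightarrow> ('b \<Rightarrow> complex)"
  assumes "clin f" shows "f x j = (\<Sum>i\<in>UNIV. x i * f (bvec i) j)"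
proof -
  have "f x = f (\<lambda>j. \<Sum>i\<in>UNIV. x i * bvec i j)" by (simp only: vec_expand)
  also have "\<dots> = (\<lambda>j. \<Sum>i\<in>UNIV. x i * f (bvec i) j)" by (rule clin_sum_set[OF assms]) simp
  finally show ?thesis by simp
qed

lemma clin_fun_add: "clin_fun f \<Longrightarrow> f (vadd x y) = f x + f y" by (simp add: clin_fun_def)
lemma clin_fun_scale: "clin_fun f \<Longrightarrow> f (vscale c x) = c * f x" by (simp add: clin_fun_def)
lemma clin_fun_zero: "clin_fun f \<Longrightarrow> f (\<lambda>_. 0) = 0"
  using clin_fun_scale[of f 0 "\<lambda>_. 0"] by (simp add: vscale_def)

lemma clin_fun_sum_set:
  assumes f: "clin_fun f" and A: "finite A"
  shows "f (\<lambda>j. \<Sum>i\<in>A. x i * bvec i j) = (\<Sum>i\<in>A. x i * f (bvec i))"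
  using A
proof (induction A rule: finite_induct)
  case empty then show ?case using clin_fun_zero[OF f] by simp
next
  case (insert a A)
  have "(\<lambda>j. \<Sum>i\<in>insert a A. x i * bvec i j) = vadd (vscale (x a) (bvec a)) (\<lambda>j. \<Sum>i\<in>A. x i * bvec i j)"
    using insert by (simp add: vadd_def vscale_def)
  then show ?case
    using insert clin_fun_add[OF f] clin_fun_scale[OF f] by simp
qed

lemma clin_fun_expand:
  fixes f :: "('a::finite \<Rightarrow> complex) \<Rightarrow> complex"
  assumes "clin_fun f" shows "f x = (\<Sum>i\<in>UNIV. x i * f (bvec i))"
proof -
  have "f x = f (\<lambda>j. \<Sum>i\<in>UNIV. x i * bvec i j)" by (simp only: vec_expand)
  also have "\<dots> = (\<Sum>i\<in>UNIV. x i * f (bvec i))" by (rule clin_fun_sum_set[OF assms]) simp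
  finally show ?thesis .
qed

lemma antilin_sum_set:
  assumes f: "antilin f" and A: "finite A"
  shows "f (\<lambda>j. \<Sum>i\<in>A. x i * bvec i j) = (\<lambda>j. \<Sum>i\<in>A. cnj (x i) * f (bvec i) j)"
  using A
proof (induction A rule: finite_induct)
  case empty
  have "f (\<lambda>_. 0) = f (vscale 0 (\<lambda>_. 0))" by (simp add: vscale_def)
  also have "\<dots> = vscale 0 (f (\<lambda>_. 0))" using f by (simp add: antilin_def)
  finally show ?case by (simp add: vscale_def)
next
  case (insert a A)
  have "(\<lambda>j. \<Sum>i\<in>insert a A. x i * bvec i j) = vadd (vscale (x a) (bvec a)) (\<lambda>j. \<Sum>i\<in>A. x i * bvec i j)"
    using insert by (simp add: vadd_def vscale_def)
  then have "f (\<lambda>j. \<Sum>i\<in>insert a A. x i * bvec i j) = vadd (vscale (cnj (x a)) (f (bvec a))) (\<lambda>j. \<Sum>i\<in>A. cnj (x i) * f (bvec i) j)"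
    using insert f by (simp add: antilin_def)
  then show ?case using insert by (simp add: vadd_def vscale_def)
qed

lemma antilin_expand:
  fixes f :: "('a::finite \<Rightarrow> complex) \<Rightarrow> ('b \<Rightarrow> complex)"
  assumes "antilin f" shows "f x j = (\<Sum>i\<in>UNIV. cnj (x i) * f (bvec i) j)"
proof -
  have "f x = f (\<lambda>j. \<Sum>i\<in>UNIV. x i * bvec i j)" by (simp only: vec_expand)
  also have "\<dots> = (\<lambda>j. \<Sum>i\<in>UNIV. cnj (x i) * f (bvec i) j)" by (rule antilin_sum_set[OF assms]) simp
  finally show ?thesis by simp
qed

lemma bilin_expand:
  fixes m :: "('a::finite \<Rightarrow> complex) \<Rightarrow> ('a \<Rightarrow> complex) \<Rightarrow> ('a \<Rightarrow> complex)"
  assumes "bilin m"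
  shows "m x y c = (\<Sum>a\<in>UNIV. \<Sum>b\<in>UNIV. x a * y b * m (bvec a) (bvec b) c)"
proof -
  have l: "clin (\<lambda>x. m x y)" using assms by (simp add: bilin_def)
  have r: "\<And>a. clin (m (bvec a))" using assms by (simp add: bilin_def)
  have 1: "m x y c = (\<Sum>a\<in>UNIV. x a * m (bvec a) y c)" using clin_expand[OF l, of x c] by simp
  have 2: "\<And>a. m (bvec a) y c = (\<Sum>b\<in>UNIV. y b * m (bvec a) (bvec b) c)"
    using clin_expand[OF r] by blast
  show ?thesis unfolding 1 2 by (simp add: sum_distrib_left mult.assoc)
qed

lemma clin_fun_ext:
  fixes f g :: "('a::finite \<Rightarrow> complex) \<Rightarrow> complex"
  assumes "clin_fun f" "clin_fun g" "\<And>i. f (bvec i) = g (bvec i)"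
  shows "f x = g x"
  using clin_fun_expand[OF assms(1), of x] clin_fun_expand[OF assms(2), of x] assms(3) by simp

lemma clin_ext:
  fixes f g :: "('a::finite \<Rightarrow> complex) \<Rightarrow> ('b \<Rightarrow> complex)"
  assumes "clin f" "clin g" "\<And>i. f (bvec i) = g (bvec i)"
  shows "f x = g x"
proof
  fix j show "f x j = g x j"
  using clin_expand[OF assms(1), of x j] clin_expand[OF assms(2), of x j] assms(3) by simp
qed

lemma bvec_pair: "bvec (a, b) = tens (bvec a) (bvec b)"
  by (auto simp: bvec_def tens_def)

lemma clin_ext2:
  fixes f g :: "('a::finite \<times> 'b::finite \<Rightarrow> complex) \<Rightarrow> ('c \<Rightarrow> complex)"
  assumes "clin f" "clin g" "\<And>a b. f (tens (bvec a) (bvec b)) = g (tens (bvec a) (bvec b))"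
  shows "f x = g x"
proof (rule clin_ext[OF assms(1,2)])
  fix i :: "'a \<times> 'b" obtain a b where "i = (a, b)" by fastforce
  then show "f (bvec i) = g (bvec i)" using assms(3)[of a b] by (simp add: bvec_pair)
qed

lemma clin_fun_ext2:
  fixes f g :: "('a::finite \<times> 'b::finite \<Rightarrow> complex) \<Rightarrow> complex"
  assumes "clin_fun f" "clin_fun g" "\<And>a b. f (tens (bvec a) (bvec b)) = g (tens (bvec a) (bvec b))"
  shows "f x = g x"
proof (rule clin_fun_ext[OF assms(1,2)])
  fix i :: "'a \<times> 'b" obtain a b where "i = (a, b)" by fastforce
  then show "f (bvec i) = g (bvec i)" using assms(3)[of a b] by (simp add: bvec_pair)
qed

lemma clinI: "(\<And>x y. f (vadd x y) = vadd (f x) (f y)) \<Longrightarrow> (\<And>c x. f (vscale c x) = vscale c (f x)) \<Longrightarrow> clin f"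
  by (simp add: clin_def)
lemma clin_funI: "(\<And>x y. f (vadd x y) = f x + f y) \<Longrightarrow> (\<And>c x. f (vscale c x) = c * f x) \<Longrightarrow> clin_fun f"
  by (simp add: clin_fun_def)

lemma clin_comp: "clin f \<Longrightarrow> clin g \<Longrightarrow> clin (\<lambda>x. f (g x))"
  by (simp add: clin_def)
lemma clin_fun_comp: "clin_fun f \<Longrightarrow> clin g \<Longrightarrow> clin_fun (\<lambda>x. f (g x))"
  by (simp add: clin_def clin_fun_def)
lemma clin_id: "clin (\<lambda>x. x)" by (simp add: clin_def)


lemma clin_kernel: "clin (\<lambda>X. (\<lambda>j. \<Sum>p\<in>UNIV. X p * K p j))"
proof (rule clinI)
  fix X Y show "(\<lambda>j. \<Sum>p\<in>UNIV. vadd X Y p * K p j) = vadd (\<lambda>j. \<Sum>p\<in>UNIV. X p * K p j) (\<lambda>j. \<Sum>p\<in>UNIV. Y p * K p j)"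
    by (simp add: vadd_def distrib_right sum.distrib)
next
  fix c X show "(\<lambda>j. \<Sum>p\<in>UNIV. vscale c X p * K p j) = vscale c (\<lambda>j. \<Sum>p\<in>UNIV. X p * K p j)"
    by (simp add: vscale_def sum_distrib_left mult.assoc)
qed
lemma clin_fun_kernel: "clin_fun (\<lambda>X. \<Sum>p\<in>UNIV. X p * K p)"
proof (rule clin_funI)
  fix X Y show "(\<Sum>p\<in>UNIV. vadd X Y p * K p) = (\<Sum>p\<in>UNIV. X p * K p) + (\<Sum>p\<in>UNIV. Y p * K p)"
    by (simp add: vadd_def distrib_right sum.distrib)
next
  fix c X show "(\<Sum>p\<in>UNIV. vscale c X p * K p) = c * (\<Sum>p\<in>UNIV. X p * K p)"
    by (simp add: vscale_def sum_distrib_left mult.assoc)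
qed


lemma tens_apply [simp]: "tens x y (a, b) = x a * y b" by (simp add: tens_def)

lemma tmul_apply: "tmul m n X Y (c, d) = (\<Sum>a\<in>UNIV. \<Sum>b\<in>UNIV. \<Sum>a'\<in>UNIV. \<Sum>b'\<in>UNIV.
      X (a, b) * Y (a', b') * m (bvec a) (bvec a') c * n (bvec b) (bvec b') d)"
  by (simp add: tmul_def)

lemma tmul_tens:
  fixes m :: "('a::finite \<Rightarrow> complex) \<Rightarrow> ('a \<Rightarrow> complex) \<Rightarrow> ('a \<Rightarrow> complex)"
    and n :: "('b::finite \<Rightarrow> complex) \<Rightarrow> ('b \<Rightarrow> complex) \<Rightarrow> ('b \<Rightarrow> complex)"
  assumes m: "bilin m" and n: "bilin n"
  shows "tmul m n (tens a b) (tens c d) = tens (m a c) (n b d)"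
proof (rule ext, clarify)
  fix p q
  have "tens (m a c) (n b d) (p, q) = (\<Sum>\<alpha>\<in>UNIV. \<Sum>\<alpha>'\<in>UNIV. a \<alpha> * c \<alpha>' * m (bvec \<alpha>) (bvec \<alpha>') p) *
      (\<Sum>\<beta>\<in>UNIV. \<Sum>\<beta>'\<in>UNIV. b \<beta> * d \<beta>' * n (bvec \<beta>) (bvec \<beta>') q)"
    by (simp add: bilin_expand[OF m, of a c p] bilin_expand[OF n, of b d q])
  also have "\<dots> = (\<Sum>\<alpha>\<in>UNIV. \<Sum>\<beta>\<in>UNIV. \<Sum>\<alpha>'\<in>UNIV. \<Sum>\<beta>'\<in>UNIV. (a \<alpha> * c \<alpha>' * m (bvec \<alpha>) (bvec \<alpha>') p) *
      (b \<beta> * d \<beta>' * n (bvec \<beta>) (bvec \<beta>') q))"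
    by (simp only: sum_product)
  finally show "tmul m n (tens a b) (tens c d) (p, q) = tens (m a c) (n b d) (p, q)"
    by (simp add: tmul_apply mult_ac)
qed

lemma clin_tmul1: "clin (\<lambda>X. tmul m n X Y)"
  by (rule clinI; rule ext; clarsimp simp: tmul_apply vadd_def vscale_def ring_distribs sum.distrib sum_distrib_left mult.assoc)

lemma clin_tmul2: "clin (\<lambda>Y. tmul m n X Y)"
  by (rule clinI; rule ext; clarsimp simp: tmul_apply vadd_def vscale_def ring_distribs sum.distrib sum_distrib_left mult_ac)

lemma slice_apply: "slice \<theta> X a = (\<Sum>k\<in>UNIV. X (a, k) * \<theta> (bvec k))"
  by (simp add: slice_def)

lemma slice_tens:
  assumes "clin_fun \<theta>" shows "slice \<theta> (tens a b) = vscale (\<theta> b) a"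
proof
  fix x show "slice \<theta> (tens a b) x = vscale (\<theta> b) a x"
    using clin_fun_expand[OF assms, of b]
    by (simp add: slice_apply vscale_def sum_distrib_left mult_ac)
qed

lemma clin_slice: "clin (slice \<theta>)"
  by (rule clinI; rule ext; simp add: slice_apply vadd_def vscale_def ring_distribs sum.distrib sum_distrib_left mult.assoc)

lemma tmap_apply: "tmap f g X (j, l) = (\<Sum>i\<in>UNIV. \<Sum>k\<in>UNIV. X (i, k) * f (bvec i) j * g (bvec k) l)"
  by (simp add: tmap_def)

lemma tmap_tens:
  assumes f: "clin f" and g: "clin g"
  shows "tmap f g (tens a b) = tens (f a) (g b)"
proof (rule ext, clarify)
  fix j l
  have "tens (f a) (g b) (j, l) = (\<Sum>i\<in>UNIV. a i * f (bvec i) j) * (\<Sum>k\<in>UNIV. b k * g (bvec k) l)"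
    by (simp add: clin_expand[OF f, of a j] clin_expand[OF g, of b l])
  also have "\<dots> = (\<Sum>i\<in>UNIV. \<Sum>k\<in>UNIV. (a i * f (bvec i) j) * (b k * g (bvec k) l))"
    by (simp only: sum_product)
  finally show "tmap f g (tens a b) (j, l) = tens (f a) (g b) (j, l)"
    by (simp add: tmap_apply mult_ac)
qed

lemma clin_tmap: "clin (tmap f g)"
  by (rule clinI; rule ext; clarsimp simp: tmap_apply vadd_def vscale_def ring_distribs sum.distrib sum_distrib_left mult.assoc)

lemma mu_apply: "mu m X c = (\<Sum>a\<in>UNIV. \<Sum>b\<in>UNIV. X (a, b) * m (bvec a) (bvec b) c)"
  by (simp add: mu_def)

lemma mu_tens:
  assumes m: "bilin m" shows "mu m (tens a b) = m a b"
proof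
  fix c show "mu m (tens a b) c = m a b c"
    by (simp add: mu_apply bilin_expand[OF m, of a b c] mult.assoc)
qed

lemma clin_mu: "clin (mu m)"
  by (rule clinI; rule ext; simp add: mu_apply vadd_def vscale_def ring_distribs sum.distrib sum_distrib_left mult.assoc)

lemma flip_tens: "flip (tens a b) = tens b a"
  by (auto simp: flip_def tens_def)

lemma clin_flip: "clin flip"
  by (rule clinI; rule ext; auto simp: flip_def vadd_def vscale_def)

lemma flip_flip [simp]: "flip (flip X) = X"
  by (auto simp: flip_def)

lemma tmul_assoc:
  fixes m :: "('a::finite \<Rightarrow> complex) \<Rightarrow> ('a \<Rightarrow> complex) \<Rightarrow> ('a \<Rightarrow> complex)"
    and n :: "('b::finite \<Rightarrow> complex) \<Rightarrow> ('b \<Rightarrow> complex) \<Rightarrow> ('b \<Rightarrow> complex)"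
  assumes m: "bilin m" and n: "bilin n"
    and ma: "\<And>x y z. m (m x y) z = m x (m y z)" and na: "\<And>x y z. n (n x y) z = n x (n y z)"
  shows "tmul m n (tmul m n X Y) Z = tmul m n X (tmul m n Y Z)"
proof -
  have A: "tmul m n (tmul m n (tens a b) (tens c d)) (tens e f) = tmul m n (tens a b) (tmul m n (tens c d) (tens e f))"
    for a b c d e f
    by (simp add: tmul_tens[OF m n] ma na)
  have B: "tmul m n (tmul m n (tens a b) (tens c d)) Z = tmul m n (tens a b) (tmul m n (tens c d) Z)" for a b c d
    by (rule clin_ext2[OF clin_comp[OF clin_tmul2 clin_id] clin_comp[OF clin_tmul2 clin_tmul2]]) (rule A)
  have C: "tmul m n (tmul m n (tens a b) Y) Z = tmul m n (tens a b) (tmul m n Y Z)" for a b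
    by (rule clin_ext2[OF clin_comp[OF clin_tmul1 clin_tmul2] clin_comp[OF clin_tmul2 clin_tmul1]]) (rule B)
  show ?thesis
    by (rule clin_ext2[OF clin_comp[OF clin_tmul1 clin_tmul1] clin_tmul1]) (rule C)
qed


lemma clin_fun_sumB:
  assumes F: "clin_fun F" and A: "finite A"
  shows "F (\<lambda>p. \<Sum>q\<in>A. c q * B q p) = (\<Sum>q\<in>A. c q * F (B q))"
  using A
proof (induction A rule: finite_induct)
  case empty then show ?case using clin_fun_zero[OF F] by simp
next
  case (insert a A)
  have "(\<lambda>p. \<Sum>q\<in>insert a A. c q * B q p) = vadd (vscale (c a) (B a)) (\<lambda>p. \<Sum>q\<in>A. c q * B q p)"
    using insert by (simp add: vadd_def vscale_def)
  then show ?case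
    using insert clin_fun_add[OF F] clin_fun_scale[OF F] by simp
qed

lemma clin_sumB:
  assumes F: "clin F" and A: "finite A"
  shows "F (\<lambda>p. \<Sum>q\<in>A. c q * B q p) = (\<lambda>j. \<Sum>q\<in>A. c q * F (B q) j)"
  using A
proof (induction A rule: finite_induct)
  case empty then show ?case using clin_zero[OF F] by simp
next
  case (insert a A)
  have "(\<lambda>p. \<Sum>q\<in>insert a A. c q * B q p) = vadd (vscale (c a) (B a)) (\<lambda>p. \<Sum>q\<in>A. c q * B q p)"
    using insert by (simp add: vadd_def vscale_def)
  then show ?case
    using insert clin_add[OF F] clin_scale[OF F] by (simp add: vadd_def vscale_def)
qed

lemma clin_fun_eval: "clin F \<Longrightarrow> clin_fun (\<lambda>X. F X a)"
  by (simp add: clin_def clin_fun_def vadd_def vscale_def)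

lemma clin_kernel2: "clin (\<lambda>X. (\<lambda>j. \<Sum>a\<in>UNIV. \<Sum>b\<in>UNIV. X (a, b) * K a b j))"
  by (rule clinI; rule ext; simp add: vadd_def vscale_def ring_distribs sum.distrib sum_distrib_left mult.assoc)

lemma clin_fun_kernel2: "clin_fun (\<lambda>X. \<Sum>a\<in>UNIV. \<Sum>b\<in>UNIV. X (a, b) * K a b)"
  by (rule clin_funI; simp add: vadd_def vscale_def ring_distribs sum.distrib sum_distrib_left mult.assoc)

lemma tmap_id1: "tmap (\<lambda>x. x) g X (j, l) = (\<Sum>k\<in>UNIV. X (j, k) * g (bvec k) l)"
proof -
  have "tmap (\<lambda>x. x) g X (j, l) = (\<Sum>i\<in>UNIV. \<Sum>k\<in>UNIV. X (i, k) * bvec i j * g (bvec k) l)"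
    by (simp add: tmap_apply)
  also have "\<dots> = (\<Sum>k\<in>UNIV. \<Sum>i\<in>UNIV. (X (i, k) * g (bvec k) l) * bvec i j)"
    by (subst sum.swap) (simp add: mult_ac)
  finally show ?thesis by simp
qed

lemma tmap_id2: "tmap f (\<lambda>x. x) X (j, l) = (\<Sum>i\<in>UNIV. X (i, l) * f (bvec i) j)"
proof -
  have "tmap f (\<lambda>x. x) X (j, l) = (\<Sum>i\<in>UNIV. \<Sum>k\<in>UNIV. (X (i, k) * f (bvec i) j) * bvec k l)"
    by (simp add: tmap_apply)
  then show ?thesis by simp
qed

lemma id_lambda: "id = (\<lambda>x. x)" by (simp add: id_def)

locale gka =
  fixes mul :: "('i::finite \<Rightarrow> complex) \<Rightarrow> ('i \<Rightarrow> complex) \<Rightarrow> ('i \<Rightarrow> complex)"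
    and one :: "'i \<Rightarrow> complex"
    and st :: "('i \<Rightarrow> complex) \<Rightarrow> ('i \<Rightarrow> complex)"
    and Delta :: "('i \<Rightarrow> complex) \<Rightarrow> ('i \<times> 'i \<Rightarrow> complex)"
    and S :: "('i \<Rightarrow> complex) \<Rightarrow> ('i \<Rightarrow> complex)"
    and phi :: "('i \<Rightarrow> complex) \<Rightarrow> complex"
  assumes gka: "gen_kac_algebra mul one st Delta S phi"
begin

abbreviation "tm \<equiv> tmul mul mul"
abbreviation "P \<equiv> Delta one"

lemma bilin_mul: "bilin mul" using gka by (simp add: gen_kac_algebra_def fd_cstar_algebra_def star_algebra_def)
lemma mul_assoc: "mul (mul x y) z = mul x (mul y z)" using gka by (simp add: gen_kac_algebra_def fd_cstar_algebra_def star_algebra_def)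
lemma mul_one_left [simp]: "mul one x = x" using gka by (simp add: gen_kac_algebra_def fd_cstar_algebra_def star_algebra_def)
lemma mul_one_right [simp]: "mul x one = x" using gka by (simp add: gen_kac_algebra_def fd_cstar_algebra_def star_algebra_def)
lemma antilin_st: "antilin st" using gka by (simp add: gen_kac_algebra_def fd_cstar_algebra_def star_algebra_def)
lemma st_st [simp]: "st (st x) = x" using gka by (simp add: gen_kac_algebra_def fd_cstar_algebra_def star_algebra_def)
lemma st_mul: "st (mul x y) = mul (st y) (st x)" using gka by (simp add: gen_kac_algebra_def fd_cstar_algebra_def star_algebra_def)
lemma clin_Delta: "clin Delta" using gka by (simp add: gen_kac_algebra_def)
lemma inj_Delta: "inj Delta" using gka by (simp add: gen_kac_algebra_def)
lemma Delta_mul: "Delta (mul x y) = tm (Delta x) (Delta y)" using gka by (simp add: gen_kac_algebra_def)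
lemma Delta_st: "Delta (st x) = tstar st st (Delta x)" using gka by (simp add: gen_kac_algebra_def)
lemma coassoc: "tmap Delta id (Delta x) ((a, b), c) = tmap id Delta (Delta x) (a, (b, c))" using gka by (simp add: gen_kac_algebra_def)
lemma clin_S: "clin S" using gka by (simp add: gen_kac_algebra_def)
lemma S_one [simp]: "S one = one" using gka by (simp add: gen_kac_algebra_def)
lemma S_mul: "S (mul x y) = mul (S y) (S x)" using gka by (simp add: gen_kac_algebra_def)
lemma S_S [simp]: "S (S x) = x" using gka by (simp add: gen_kac_algebra_def)
lemma S_Delta: "tmap S S (Delta x) = flip (Delta (S x))" using gka by (simp add: gen_kac_algebra_def)
lemma ft_phi: "faithful_trace mul st phi" using gka by (simp add: gen_kac_algebra_def)
lemma clin_fun_phi: "clin_fun phi" using ft_phi by (simp add: faithful_trace_def)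
lemma phi_trace: "phi (mul x y) = phi (mul y x)" using ft_phi by (simp add: faithful_trace_def)
lemma phi_pos: "Im (phi (mul (st x) x)) = 0 \<and> Re (phi (mul (st x) x)) \<ge> 0" using ft_phi unfolding faithful_trace_def by blast
lemma phi_faithful: "phi (mul (st x) x) = 0 \<Longrightarrow> x = vzero" using ft_phi by (simp add: faithful_trace_def)
lemma phi_S [simp]: "phi (S x) = phi x" using gka by (simp add: gen_kac_algebra_def)
lemma SI: "slice phi (tm (tens one y) (Delta x)) = S (slice phi (tm (Delta y) (tens one x)))"
  using gka by (simp add: gen_kac_algebra_def)

lemma clin_mul1: "clin (\<lambda>x. mul x y)" using bilin_mul by (simp add: bilin_def)
lemma clin_mul2: "clin (mul x)" using bilin_mul by (simp add: bilin_def)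

lemma S_inj: "S x = S y \<Longrightarrow> x = y" by (metis S_S)

lemma mul_vscale1: "mul (vscale c x) y = vscale c (mul x y)" using clin_scale[OF clin_mul1] by simp
lemma mul_vscale2: "mul x (vscale c y) = vscale c (mul x y)" using clin_scale[OF clin_mul2] by simp
lemma mul_vadd1: "mul (vadd x x') y = vadd (mul x y) (mul x' y)" using clin_add[OF clin_mul1] by simp
lemma mul_vadd2: "mul x (vadd y y') = vadd (mul x y) (mul x y')" using clin_add[OF clin_mul2] by simp
lemma phi_vscale: "phi (vscale c x) = c * phi x" using clin_fun_scale[OF clin_fun_phi] .
lemma phi_vadd: "phi (vadd x y) = phi x + phi y" using clin_fun_add[OF clin_fun_phi] .
lemma st_vscale: "st (vscale c x) = vscale (cnj c) (st x)" using antilin_st by (simp add: antilin_def)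
lemma st_vadd: "st (vadd x y) = vadd (st x) (st y)" using antilin_st by (simp add: antilin_def)
lemma S_vscale: "S (vscale c x) = vscale c (S x)" using clin_scale[OF clin_S] .

lemma mul_zero1 [simp]: "mul vzero y = vzero" using clin_zero[OF clin_mul1] by (simp add: vzero_def)
lemma mul_zero2 [simp]: "mul x vzero = vzero" using clin_zero[OF clin_mul2] by (simp add: vzero_def)
lemma phi_zero [simp]: "phi vzero = 0" using clin_fun_zero[OF clin_fun_phi] by (simp add: vzero_def)
lemma Delta_zero: "Delta vzero = (\<lambda>_. 0)" using clin_zero[OF clin_Delta] by (simp add: vzero_def)

lemma st_one [simp]: "st one = one"
proof -
  have "one = st (st one)" by simp
  also have "\<dots> = st (mul (st one) one)" by simp
  also have "\<dots> = mul (st one) (st (st one))" by (rule st_mul)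
  also have "\<dots> = st one" by simp
  finally show ?thesis by simp
qed

lemma vsub_eq: "vadd x (vscale (-1) y) = vzero \<Longrightarrow> x = y"
  by (auto simp: vadd_def vscale_def vzero_def fun_eq_iff)

lemma ND: "(\<And>y. phi (mul z y) = 0) \<Longrightarrow> z = vzero"
  using phi_faithful[of z] phi_trace[of z "st z"] by metis

lemma ND_eq: assumes "\<And>y. phi (mul z y) = phi (mul z' y)" shows "z = z'"
proof (rule vsub_eq, rule ND)
  fix y show "phi (mul (vadd z (vscale (-1) z')) y) = 0"
    using assms[of y] by (simp add: mul_vadd1 mul_vscale1 phi_vadd phi_vscale)
qed

definition central :: "('i \<Rightarrow> complex) \<Rightarrow> bool" where
  "central z \<longleftrightarrow> (\<forall>x. mul z x = mul x z)"

lemma tens_vscale1: "tens (vscale c a) b = vscale c (tens a b)" by (auto simp: tens_def vscale_def)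
lemma tens_vscale2: "tens a (vscale c b) = vscale c (tens a b)" by (auto simp: tens_def vscale_def)

lemma tm_tens: "tm (tens a b) (tens c d) = tens (mul a c) (mul b d)"
  by (rule tmul_tens[OF bilin_mul bilin_mul])

lemma tm_assoc: "tm (tm X Y) Z = tm X (tm Y Z)"
  by (rule tmul_assoc[OF bilin_mul bilin_mul]) (simp_all add: mul_assoc)

lemma tm_one_left [simp]: "tm (tens one one) X = X"
  by (rule clin_ext2[OF clin_tmul2 clin_id]) (simp add: tm_tens)
lemma tm_one_right [simp]: "tm X (tens one one) = X"
  by (rule clin_ext2[OF clin_tmul1 clin_id]) (simp add: tm_tens)

lemma central_tens_comm: "central z \<Longrightarrow> tm (tens one z) X = tm X (tens one z)"
  by (rule clin_ext2[OF clin_tmul2 clin_tmul1]) (simp add: tm_tens central_def)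

lemma Delta_one_left: "tm P (Delta x) = Delta x" using Delta_mul[of one x] by simp
lemma Delta_one_right: "tm (Delta x) P = Delta x" using Delta_mul[of x one] by simp


lemma S_sym_P: "flip (tmap S S P) = P" using S_Delta[of one] by simp

definition E where "E x = slice phi (Delta x)"
definition g where "g = E one"
definition Phi2 where "Phi2 X = phi (slice phi X)"

lemma g_def2: "g = slice phi P" by (simp add: g_def E_def)

lemma clin_fun_Phi2: "clin_fun Phi2"
  unfolding Phi2_def by (rule clin_fun_comp[OF clin_fun_phi clin_slice])

lemma slice_phi_tens: "slice phi (tens a b) = vscale (phi b) a"
  by (rule slice_tens[OF clin_fun_phi])

lemma Phi2_tens: "Phi2 (tens a b) = phi a * phi b"
  by (simp add: Phi2_def slice_phi_tens phi_vscale mult.commute)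

lemma SI1: "E x = S (slice phi (tm P (tens one x)))"
  using SI[of one x] by (simp add: E_def)

lemma S_E: "S (E x) = slice phi (tm P (tens one x))"
  using SI1 by simp

lemma S_g: "S g = g"
  using SI1[of one] by (simp add: g_def E_def)

lemma clin_tm1: "clin (\<lambda>X. tm X Y)" by (rule clin_tmul1)
lemma clin_tm2: "clin (\<lambda>Y. tm X Y)" by (rule clin_tmul2)

lemma K2: "slice phi (tm (tens a one) X) = mul a (slice phi X)"
proof (rule clin_ext2[of "\<lambda>X. slice phi (tm (tens a one) X)" "\<lambda>X. mul a (slice phi X)"])
  show "clin (\<lambda>X. slice phi (tm (tens a one) X))" by (rule clin_comp[OF clin_slice clin_tm2])
  show "clin (\<lambda>X. mul a (slice phi X))" by (rule clin_comp[OF clin_mul2 clin_slice])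
  fix i j :: 'i show "slice phi (tm (tens a one) (tens (bvec i) (bvec j))) = mul a (slice phi (tens (bvec i) (bvec j)))"
    by (simp add: tm_tens slice_phi_tens mul_vscale2)
qed

lemma clin_fun_phiw: "clin_fun (\<lambda>z. phi (mul w z))"
  by (rule clin_fun_comp[OF clin_fun_phi clin_mul2])

lemma K4: "slice phi (tm (tens one w) X) = slice (\<lambda>z. phi (mul w z)) X"
proof (rule clin_ext2[of "\<lambda>X. slice phi (tm (tens one w) X)" "slice (\<lambda>z. phi (mul w z))"])
  show "clin (\<lambda>X. slice phi (tm (tens one w) X))" by (rule clin_comp[OF clin_slice clin_tm2])
  show "clin (slice (\<lambda>z. phi (mul w z)))" by (rule clin_slice)
  fix i j :: 'i show "slice phi (tm (tens one w) (tens (bvec i) (bvec j))) = slice (\<lambda>z. phi (mul w z)) (tens (bvec i) (bvec j))"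
    by (simp add: tm_tens slice_phi_tens slice_tens[OF clin_fun_phiw])
qed

lemma clin_row: "clin (\<lambda>D. (\<lambda>b. D (a, b)))"
  by (rule clinI) (auto simp: vadd_def vscale_def)

lemma K5: "slice phi (tm D (tens one x)) a = phi (mul (\<lambda>b. D (a, b)) x)"
proof (rule clin_fun_ext2[of "\<lambda>D. slice phi (tm D (tens one x)) a" "\<lambda>D. phi (mul (\<lambda>b. D (a, b)) x)"])
  show "clin_fun (\<lambda>D. slice phi (tm D (tens one x)) a)"
    by (rule clin_fun_eval[OF clin_comp[OF clin_slice clin_tm1]])
  show "clin_fun (\<lambda>D. phi (mul (\<lambda>b. D (a, b)) x))"
    by (rule clin_fun_comp[OF clin_fun_phi clin_comp[OF clin_mul1 clin_row]])
  fix i j :: 'i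
  have e: "(\<lambda>b. bvec i a * bvec j b) = vscale (bvec i a) (bvec j)"
    by (auto simp: vscale_def)
  show "slice phi (tm (tens (bvec i) (bvec j)) (tens one x)) a = phi (mul (\<lambda>b. tens (bvec i) (bvec j) (a, b)) x)"
    by (simp add: e tm_tens slice_phi_tens mul_vscale1 phi_vscale) (simp add: vscale_def)
qed

lemma T8: assumes "\<And>x. slice phi (tm D1 (tens one x)) = slice phi (tm D2 (tens one x))"
  shows "D1 = D2"
proof (rule ext, clarify)
  fix a b
  have "(\<lambda>b. D1 (a, b)) = (\<lambda>b. D2 (a, b))"
  proof (rule ND_eq)
    fix y show "phi (mul (\<lambda>b. D1 (a, b)) y) = phi (mul (\<lambda>b. D2 (a, b)) y)"
      using fun_cong[OF assms[of y], of a] by (simp add: K5)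
  qed
  then show "D1 (a, b) = D2 (a, b)" by (metis)
qed

lemma Dslice:
  assumes th: "clin_fun \<theta>"
  shows "Delta (slice \<theta> (Delta x)) = tmap id (\<lambda>z. slice \<theta> (Delta z)) (Delta x)"
proof (rule ext, clarify)
  fix a b
  have c1: "(\<Sum>i\<in>UNIV. Delta x (i, c) * Delta (bvec i) (a, b)) = (\<Sum>k\<in>UNIV. Delta x (a, k) * Delta (bvec k) (b, c))" for c
    using coassoc[of x a b c] by (simp add: id_def tmap_id1 tmap_id2)
  have "Delta (slice \<theta> (Delta x)) (a, b) = (\<Sum>i\<in>UNIV. slice \<theta> (Delta x) i * Delta (bvec i) (a, b))"
    by (rule clin_expand[OF clin_Delta])
  also have "\<dots> = (\<Sum>i\<in>UNIV. \<Sum>c\<in>UNIV. \<theta> (bvec c) * (Delta x (i, c) * Delta (bvec i) (a, b)))"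
    by (simp add: slice_apply sum_distrib_left sum_distrib_right mult_ac)
  also have "\<dots> = (\<Sum>c\<in>UNIV. \<theta> (bvec c) * (\<Sum>i\<in>UNIV. Delta x (i, c) * Delta (bvec i) (a, b)))"
    by (subst sum.swap) (simp add: sum_distrib_left)
  also have "\<dots> = (\<Sum>c\<in>UNIV. \<theta> (bvec c) * (\<Sum>k\<in>UNIV. Delta x (a, k) * Delta (bvec k) (b, c)))"
    by (simp add: c1)
  also have "\<dots> = (\<Sum>k\<in>UNIV. Delta x (a, k) * (\<Sum>c\<in>UNIV. Delta (bvec k) (b, c) * \<theta> (bvec c)))"
    unfolding sum_distrib_left by (subst sum.swap) (simp add: mult_ac)
  also have "\<dots> = tmap id (\<lambda>z. slice \<theta> (Delta z)) (Delta x) (a, b)"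
    by (simp add: id_def tmap_id1 slice_apply)
  finally show "Delta (slice \<theta> (Delta x)) (a, b) = tmap id (\<lambda>z. slice \<theta> (Delta z)) (Delta x) (a, b)" .
qed

lemma mu_tmap_id: "mu mul (tmap id G X) c = (\<Sum>a\<in>UNIV. \<Sum>k\<in>UNIV. X (a, k) * mul (bvec a) (G (bvec k)) c)"
proof -
  have "mu mul (tmap id G X) c = (\<Sum>a\<in>UNIV. \<Sum>b\<in>UNIV. (\<Sum>k\<in>UNIV. X (a, k) * G (bvec k) b) * mul (bvec a) (bvec b) c)"
    by (simp add: mu_apply id_def tmap_id1)
  also have "\<dots> = (\<Sum>a\<in>UNIV. \<Sum>k\<in>UNIV. X (a, k) * (\<Sum>b\<in>UNIV. G (bvec k) b * mul (bvec a) (bvec b) c))"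
  proof (rule sum.cong[OF refl])
    fix a show "(\<Sum>b\<in>UNIV. (\<Sum>k\<in>UNIV. X (a, k) * G (bvec k) b) * mul (bvec a) (bvec b) c) =
       (\<Sum>k\<in>UNIV. X (a, k) * (\<Sum>b\<in>UNIV. G (bvec k) b * mul (bvec a) (bvec b) c))"
      unfolding sum_distrib_left sum_distrib_right by (subst sum.swap) (simp add: mult_ac)
  qed
  also have "\<dots> = (\<Sum>a\<in>UNIV. \<Sum>k\<in>UNIV. X (a, k) * mul (bvec a) (G (bvec k)) c)"
  proof -
    have eq: "\<And>a k. mul (bvec a) (G (bvec k)) c = (\<Sum>b\<in>UNIV. G (bvec k) b * mul (bvec a) (bvec b) c)"
      by (rule clin_expand[OF clin_mul2])
    show ?thesis by (simp only: eq)
  qed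
  finally show ?thesis .
qed

lemma tmap_id_comp:
  assumes G: "clin G" shows "tmap id G (tmap id F X) = tmap id (\<lambda>z. G (F z)) X"
proof (rule ext, clarify)
  fix j l
  have "tmap id G (tmap id F X) (j, l) = (\<Sum>k\<in>UNIV. (\<Sum>k'\<in>UNIV. X (j, k') * F (bvec k') k) * G (bvec k) l)"
    by (simp add: id_def tmap_id1)
  also have "\<dots> = (\<Sum>k'\<in>UNIV. X (j, k') * (\<Sum>k\<in>UNIV. F (bvec k') k * G (bvec k) l))"
    unfolding sum_distrib_left sum_distrib_right by (subst sum.swap) (simp add: mult_ac)
  also have "\<dots> = tmap id (\<lambda>z. G (F z)) X (j, l)"
  proof -
    have eq: "\<And>k'. G (F (bvec k')) l = (\<Sum>k\<in>UNIV. F (bvec k') k * G (bvec k) l)"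
      by (rule clin_expand[OF G])
    show ?thesis by (simp add: id_def tmap_id1 eq)
  qed
  finally show "tmap id G (tmap id F X) (j, l) = tmap id (\<lambda>z. G (F z)) X (j, l)" .
qed

end

context gka begin

lemma clin_eps: "clin (eps_t mul Delta S)"
proof -
  have "clin (\<lambda>x. mu mul (tmap id S (Delta x)))"
    by (rule clin_comp[OF clin_mu clin_comp[OF clin_tmap clin_Delta]])
  then show ?thesis unfolding eps_t_def[abs_def] .
qed

lemma T7: "(\<lambda>c. \<Sum>a\<in>UNIV. \<Sum>k\<in>UNIV. X (a, k) * mul (bvec a) (slice phi (tm W (tens one (bvec k)))) c) = slice phi (tm X W)"
proof -
  have base: "mul (bvec i) (slice phi (tm W (tens one (bvec j)))) = slice phi (tm (tens (bvec i) (bvec j)) W)" for i j :: 'i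
  proof (rule clin_ext2[of "\<lambda>W. mul (bvec i) (slice phi (tm W (tens one (bvec j))))" "\<lambda>W. slice phi (tm (tens (bvec i) (bvec j)) W)"])
    show "clin (\<lambda>W. mul (bvec i) (slice phi (tm W (tens one (bvec j)))))"
      by (rule clin_comp[OF clin_mul2 clin_comp[OF clin_slice clin_tm1]])
    show "clin (\<lambda>W. slice phi (tm (tens (bvec i) (bvec j)) W))"
      by (rule clin_comp[OF clin_slice clin_tm2])
    fix p q :: 'i
    show "mul (bvec i) (slice phi (tm (tens (bvec p) (bvec q)) (tens one (bvec j)))) =
          slice phi (tm (tens (bvec i) (bvec j)) (tens (bvec p) (bvec q)))"
      using phi_trace[of "bvec q" "bvec j"] by (simp add: tm_tens slice_phi_tens mul_vscale2)
  qed
  show ?thesis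
  proof (rule clin_ext2[of "\<lambda>X. (\<lambda>c. \<Sum>a\<in>UNIV. \<Sum>k\<in>UNIV. X (a, k) * mul (bvec a) (slice phi (tm W (tens one (bvec k)))) c)" "\<lambda>X. slice phi (tm X W)"])
    show "clin (\<lambda>X. (\<lambda>c. \<Sum>a\<in>UNIV. \<Sum>k\<in>UNIV. X (a, k) * mul (bvec a) (slice phi (tm W (tens one (bvec k)))) c))"
      by (rule clin_kernel2)
    show "clin (\<lambda>X. slice phi (tm X W))" by (rule clin_comp[OF clin_slice clin_tm1])
    fix i j :: 'i
    show "(\<lambda>c. \<Sum>a\<in>UNIV. \<Sum>k\<in>UNIV. tens (bvec i) (bvec j) (a, k) * mul (bvec a) (slice phi (tm W (tens one (bvec k)))) c) =
          slice phi (tm (tens (bvec i) (bvec j)) W)"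
      by (simp add: mult.assoc base[symmetric] sum_distrib_left[symmetric])
  qed
qed

lemma Inv: "eps_t mul Delta S (slice phi (tm (tens one w) (Delta x))) = E (mul x w)"
proof -
  let ?psi = "\<lambda>z. phi (mul w z)"
  have 1: "slice phi (tm (tens one w) (Delta x)) = slice ?psi (Delta x)" by (rule K4)
  have 2: "Delta (slice ?psi (Delta x)) = tmap id (\<lambda>z. slice ?psi (Delta z)) (Delta x)"
    by (rule Dslice[OF clin_fun_phiw])
  have 4: "S (slice ?psi (Delta z)) = slice phi (tm (Delta w) (tens one z))" for z
  proof -
    have "slice ?psi (Delta z) = S (slice phi (tm (Delta w) (tens one z)))"
      using SI[of w z] K4[of w "Delta z"] by simp
    then show ?thesis by simp
  qed
  have "eps_t mul Delta S (slice ?psi (Delta x)) = mu mul (tmap id S (tmap id (\<lambda>z. slice ?psi (Delta z)) (Delta x)))"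
    by (simp add: eps_t_def 2)
  also have "\<dots> = mu mul (tmap id (\<lambda>z. slice phi (tm (Delta w) (tens one z))) (Delta x))"
    by (simp add: tmap_id_comp[OF clin_S] 4)
  also have "\<dots> = (\<lambda>c. \<Sum>a\<in>UNIV. \<Sum>k\<in>UNIV. Delta x (a, k) * mul (bvec a) (slice phi (tm (Delta w) (tens one (bvec k)))) c)"
    by (rule ext) (rule mu_tmap_id)
  also have "\<dots> = slice phi (tm (Delta x) (Delta w))" by (rule T7)
  also have "\<dots> = E (mul x w)" by (simp add: E_def Delta_mul)
  finally show ?thesis using 1 by simp
qed

lemma C11: "eps_t mul Delta S (E y) = E y"
  using Inv[of one y] by (simp add: E_def)

lemma phiS_swap: "phi (mul (S a) x) = phi (mul (S x) a)"
proof -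
  have "S (mul (S x) a) = mul (S a) x" by (simp add: S_mul)
  then show ?thesis by (metis phi_S)
qed

lemma Q: "Phi2 (tm (flip (tmap S S X)) (tens one x)) = Phi2 (tm (tens (S x) one) X)"
proof (rule clin_fun_ext2[of "\<lambda>X. Phi2 (tm (flip (tmap S S X)) (tens one x))" "\<lambda>X. Phi2 (tm (tens (S x) one) X)"])
  show "clin_fun (\<lambda>X. Phi2 (tm (flip (tmap S S X)) (tens one x)))"
    by (rule clin_fun_comp[OF clin_fun_Phi2 clin_comp[OF clin_tm1 clin_comp[OF clin_flip clin_tmap]]])
  show "clin_fun (\<lambda>X. Phi2 (tm (tens (S x) one) X))"
    by (rule clin_fun_comp[OF clin_fun_Phi2 clin_tm2])
  fix a b :: 'i
  show "Phi2 (tm (flip (tmap S S (tens (bvec a) (bvec b)))) (tens one x)) = Phi2 (tm (tens (S x) one) (tens (bvec a) (bvec b)))"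
    using phiS_swap[of "bvec a" x]
    by (simp add: tmap_tens[OF clin_S clin_S] flip_tens tm_tens Phi2_tens mult.commute)
qed

lemma C2: "phi (mul g x) = Phi2 (Delta x)"
proof -
  have "Phi2 (Delta x) = phi (E x)" by (simp add: Phi2_def E_def)
  also have "\<dots> = phi (slice phi (tm P (tens one x)))" by (simp add: SI1[of x])
  also have "\<dots> = Phi2 (tm (flip (tmap S S P)) (tens one x))" by (simp add: S_sym_P Phi2_def)
  also have "\<dots> = Phi2 (tm (tens (S x) one) P)" by (rule Q)
  also have "\<dots> = phi (mul (S x) g)" by (simp add: Phi2_def K2 g_def2)
  also have "\<dots> = phi (mul (S g) x)" by (rule phiS_swap[symmetric])
  finally show ?thesis by (simp add: S_g)
qed

lemma Phi2_trace: "Phi2 (tm X Y) = Phi2 (tm Y X)"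
proof -
  have base: "Phi2 (tm (tens (bvec i) (bvec j)) Y) = Phi2 (tm Y (tens (bvec i) (bvec j)))" for i j :: 'i
    by (rule clin_fun_ext2[OF clin_fun_comp[OF clin_fun_Phi2 clin_tm2] clin_fun_comp[OF clin_fun_Phi2 clin_tm1]])
       (simp add: tm_tens Phi2_tens phi_trace)
  show ?thesis
    by (rule clin_fun_ext2[OF clin_fun_comp[OF clin_fun_Phi2 clin_tm1] clin_fun_comp[OF clin_fun_Phi2 clin_tm2]])
       (rule base)
qed

lemma C3: "central g"
  unfolding central_def
proof
  fix x show "mul g x = mul x g"
  proof (rule ND_eq)
    fix y
    have "phi (mul (mul g x) y) = Phi2 (tm (Delta x) (Delta y))" by (simp add: mul_assoc C2 Delta_mul)
    also have "\<dots> = Phi2 (tm (Delta y) (Delta x))" by (rule Phi2_trace)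
    also have "\<dots> = phi (mul (mul g y) x)" by (simp add: mul_assoc C2 Delta_mul)
    also have "\<dots> = phi (mul x (mul g y))" by (rule phi_trace)
    also have "\<dots> = phi (mul (mul x g) y)" by (simp add: mul_assoc)
    finally show "phi (mul (mul g x) y) = phi (mul (mul x g) y)" .
  qed
qed

lemma slice_tmap_id:
  assumes th: "clin_fun \<theta>" shows "slice \<theta> (tmap id F X) = slice (\<lambda>z. \<theta> (F z)) X"
proof
  fix a
  have eq: "\<And>k. \<theta> (F (bvec k)) = (\<Sum>l\<in>UNIV. F (bvec k) l * \<theta> (bvec l))"
    by (rule clin_fun_expand[OF th])
  have "slice \<theta> (tmap id F X) a = (\<Sum>l\<in>UNIV. (\<Sum>k\<in>UNIV. X (a, k) * F (bvec k) l) * \<theta> (bvec l))"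
    by (simp add: slice_apply id_def tmap_id1)
  also have "\<dots> = (\<Sum>k\<in>UNIV. X (a, k) * (\<Sum>l\<in>UNIV. F (bvec k) l * \<theta> (bvec l)))"
    unfolding sum_distrib_left sum_distrib_right by (subst sum.swap) (simp add: mult_ac)
  also have "\<dots> = slice (\<lambda>z. \<theta> (F z)) X a" by (simp add: slice_apply eq)
  finally show "slice \<theta> (tmap id F X) a = slice (\<lambda>z. \<theta> (F z)) X a" .
qed

lemma C12a: "slice phi (tm (tens one g) (Delta x)) = E (E x)"
proof -
  have f: "(\<lambda>z. phi (mul g z)) = (\<lambda>z. phi (E z))" by (rule ext) (simp add: C2 Phi2_def E_def)
  have "slice phi (tm (tens one g) (Delta x)) = slice (\<lambda>z. phi (E z)) (Delta x)" by (simp add: K4 f)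
  also have "\<dots> = slice phi (tmap id E (Delta x))" by (rule slice_tmap_id[OF clin_fun_phi, symmetric])
  also have "\<dots> = slice phi (Delta (E x))"
    using Dslice[OF clin_fun_phi, of x] by (simp add: E_def[abs_def])
  finally show ?thesis by (simp add: E_def)
qed

lemma C12: "slice phi (tm (tens one g) (Delta x)) = E (mul x g)"
  using C12a[of x] C11[of "E x"] Inv[of g x] by simp

lemma C13:
  assumes c: "central z" and h: "\<And>x. slice phi (tm (tens one z) (Delta x)) = E (mul x z)"
  shows "Delta z = tm P (tens one z)"
proof (rule T8)
  fix x
  have "S (slice phi (tm (Delta z) (tens one x))) = S (slice phi (tm (tm P (tens one z)) (tens one x)))"
  proof -
    have "S (slice phi (tm (Delta z) (tens one x))) = E (mul x z)" using SI[of z x] h[of x] by simp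
    also have "\<dots> = S (slice phi (tm P (tens one (mul x z))))" by (rule SI1)
    also have "tens one (mul x z) = tm (tens one z) (tens one x)"
      using c by (simp add: tm_tens central_def)
    finally show ?thesis by (simp add: tm_assoc)
  qed
  then show "slice phi (tm (Delta z) (tens one x)) = slice phi (tm (tm P (tens one z)) (tens one x))"
    by (rule S_inj)
qed

lemma G9: "tmap S S (tm X Y) = tm (tmap S S Y) (tmap S S X)"
proof -
  have base: "tmap S S (tm (tens (bvec i) (bvec j)) Y) = tm (tmap S S Y) (tmap S S (tens (bvec i) (bvec j)))" for i j :: 'i
    by (rule clin_ext2[OF clin_comp[OF clin_tmap clin_tm2] clin_comp[OF clin_tm1 clin_tmap]])
       (simp add: tm_tens tmap_tens[OF clin_S clin_S] S_mul)
  show ?thesis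
    by (rule clin_ext2[OF clin_comp[OF clin_tmap clin_tm1] clin_comp[OF clin_tm2 clin_tmap]]) (rule base)
qed

lemma G10: "flip (tm X Y) = tm (flip X) (flip Y)"
proof -
  have base: "flip (tm (tens (bvec i) (bvec j)) Y) = tm (flip (tens (bvec i) (bvec j))) (flip Y)" for i j :: 'i
    by (rule clin_ext2[OF clin_comp[OF clin_flip clin_tm2] clin_comp[OF clin_tm2 clin_flip]])
       (simp add: tm_tens flip_tens)
  show ?thesis
    by (rule clin_ext2[OF clin_comp[OF clin_flip clin_tm1] clin_comp[OF clin_tm1 clin_flip]]) (rule base)
qed

lemma C14:
  assumes s: "S z = z" and d: "Delta z = tm P (tens one z)"
  shows "Delta z = tm (tens z one) P"
proof -
  have "flip (Delta z) = tmap S S (Delta z)" using S_Delta[of z] s by simp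
  also have "\<dots> = tm (tens one z) (flip P)"
    by (simp add: d G9 tmap_tens[OF clin_S clin_S] s S_Delta[of one])
  finally have "flip (flip (Delta z)) = flip (tm (tens one z) (flip P))" by simp
  then show ?thesis by (simp add: G10 flip_tens)
qed

lemma g_Delta1: "Delta g = tm P (tens one g)"
  by (rule C13[OF C3 C12])

lemma g_Delta2: "Delta g = tm (tens g one) P"
  by (rule C14[OF S_g g_Delta1])

end

context gka begin

definition B where "B u v = phi (mul (st u) v)"

lemma phi_mul_vadd4: "phi (mul (vadd a b) (vadd c d)) = phi (mul a c) + phi (mul a d) + phi (mul b c) + phi (mul b d)"
  by (simp add: mul_vadd1 mul_vadd2 phi_vadd)

lemma phi_one_real: "Im (phi one) = 0"
  using phi_pos[of one] by simp

lemma phi_herm: "phi (st x) = cnj (phi x)"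
proof -
  let ?A = "phi x" and ?B = "phi (st x)" and ?C = "phi (mul (st x) x)"
  have e1: "phi (mul (st (vadd one x)) (vadd one x)) = phi one + ?A + ?B + ?C"
    by (simp add: st_vadd phi_mul_vadd4)
  have e2: "phi (mul (st (vadd one (vscale \<i> x))) (vadd one (vscale \<i> x))) = phi one + \<i> * ?A - \<i> * ?B + ?C"
    by (simp add: st_vadd st_vscale phi_mul_vadd4 mul_vscale1 mul_vscale2 phi_vscale)
  have i1: "Im (phi one + ?A + ?B + ?C) = 0" using phi_pos[of "vadd one x"] e1 by simp
  have i2: "Im (phi one + \<i> * ?A - \<i> * ?B + ?C) = 0" using phi_pos[of "vadd one (vscale \<i> x)"] e2 by simp
  have c: "Im ?C = 0" using phi_pos[of x] by simp
  from i1 c phi_one_real have "Im ?A + Im ?B = 0" by simp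
  moreover from i2 c phi_one_real have "Re ?A - Re ?B = 0" by simp
  ultimately show ?thesis by (intro complex_eqI) auto
qed

lemma B_add1: "B (vadd u u') v = B u v + B u' v" by (simp add: B_def st_vadd mul_vadd1 phi_vadd)
lemma B_add2: "B u (vadd v v') = B u v + B u v'" by (simp add: B_def mul_vadd2 phi_vadd)
lemma B_scale1: "B (vscale c u) v = cnj c * B u v" by (simp add: B_def st_vscale mul_vscale1 phi_vscale)
lemma B_scale2: "B u (vscale c v) = c * B u v" by (simp add: B_def mul_vscale2 phi_vscale)
lemma B_herm: "B v u = cnj (B u v)"
proof -
  have "cnj (B u v) = phi (st (mul (st u) v))" by (simp add: B_def phi_herm)
  also have "\<dots> = B v u" by (simp add: st_mul B_def)
  finally show ?thesis by simp
qed
lemma B_zero2 [simp]: "B u vzero = 0" by (simp add: B_def)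
lemma B_pos: "Im (B u u) = 0" "Re (B u u) \<ge> 0" using phi_pos[of u] by (simp_all add: B_def)
lemma B_faithful: "B u u = 0 \<Longrightarrow> u = vzero" using phi_faithful by (simp add: B_def)

lemma chol_step:
  fixes a :: "'k \<Rightarrow> ('i \<Rightarrow> complex)"
  assumes nz: "a k0 \<noteq> vzero"
  shows "\<exists>a' c. a' k0 = vzero \<and> (\<forall>k. a k = vzero \<longrightarrow> a' k = vzero) \<and>
           (\<forall>k l. B (a k) (a l) = B (a' k) (a' l) + cnj (c k) * c l)"
proof -
  define r where "r = B (a k0) (a k0)"
  have rI: "Im r = 0" and rR: "Re r \<ge> 0" using B_pos[of "a k0"] by (simp_all add: r_def)
  have rnz: "r \<noteq> 0"
  proof
    assume "r = 0" then have "a k0 = vzero" using B_faithful r_def by simp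
    with nz show False by simp
  qed
  have rpos: "Re r > 0" using rI rR rnz by (metis complex_eqI less_eq_real_def zero_complex.simps)
  define s where "s = sqrt (Re r)"
  have spos: "s > 0" using rpos s_def by simp
  have rs: "r = of_real s * of_real s"
    using rI rpos by (simp add: s_def complex_eq_iff) 
  define u where "u = vscale (of_real (1 / s)) (a k0)"
  define c where "c k = B u (a k)" for k
  define a' where "a' k = vadd (a k) (vscale (- c k) u)" for k
  have Buu: "B u u = 1"
    using spos by (simp add: u_def B_scale1 B_scale2 r_def[symmetric] rs)
  have ck0: "c k0 = of_real s"
    using spos by (simp add: c_def u_def B_scale1 r_def[symmetric] rs)
  have "a' k0 = vzero"
    using spos by (auto simp: a'_def ck0 u_def vadd_def vscale_def vzero_def)
  moreover have "\<forall>k. a k = vzero \<longrightarrow> a' k = vzero"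
    by (auto simp: a'_def c_def) (auto simp: vadd_def vscale_def vzero_def)
  moreover have "\<forall>k l. B (a k) (a l) = B (a' k) (a' l) + cnj (c k) * c l"
  proof (intro allI)
    fix k l
    have ak: "a k = vadd (a' k) (vscale (c k) u)" for k
      by (auto simp: a'_def vadd_def vscale_def)
    have o1: "B u (a' l) = 0" for l
      by (simp add: a'_def B_add2 B_scale2 Buu c_def)
    have o2: "B (a' k) u = 0" for k
      using o1[of k] B_herm[of "a' k" u] by simp
    show "B (a k) (a l) = B (a' k) (a' l) + cnj (c k) * c l"
      by (subst (1 2) ak) (simp add: B_add1 B_add2 B_scale1 B_scale2 o1 o2 Buu)
  qed
  ultimately show ?thesis by blast
qed

lemma chol:
  fixes a :: "'k::finite \<Rightarrow> ('i \<Rightarrow> complex)"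
  shows "card {k. a k \<noteq> vzero} \<le> n \<Longrightarrow> \<exists>(N::nat) C. \<forall>k l. B (a k) (a l) = (\<Sum>m<N. cnj (C m k) * C m l)"
proof (induction n arbitrary: a)
  case 0
  then have z: "\<forall>k. a k = vzero" by simp
  show ?case by (rule exI[of _ "0::nat"]) (simp add: z)
next
  case (Suc n)
  show ?case
  proof (cases "\<forall>k. a k = vzero")
    case True show ?thesis by (rule exI[of _ "0::nat"]) (simp add: True)
  next
    case False
    then obtain k0 where nz: "a k0 \<noteq> vzero" by blast
    obtain a' c where a'0: "a' k0 = vzero" and a'z: "\<forall>k. a k = vzero \<longrightarrow> a' k = vzero"
      and dec: "\<forall>k l. B (a k) (a l) = B (a' k) (a' l) + cnj (c k) * c l"
      using chol_step[of a k0, OF nz] by blast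
    have sub: "{k. a' k \<noteq> vzero} \<subseteq> {k. a k \<noteq> vzero} - {k0}" using a'0 a'z by blast
    have "card {k. a' k \<noteq> vzero} \<le> card ({k. a k \<noteq> vzero} - {k0})"
      by (rule card_mono[OF _ sub]) simp
    also have "\<dots> = card {k. a k \<noteq> vzero} - 1" using nz by simp
    also have "\<dots> \<le> n" using Suc.prems by simp
    finally obtain N :: nat and C where IH: "\<forall>k l. B (a' k) (a' l) = (\<Sum>m<N. cnj (C m k) * C m l)"
      using Suc.IH by blast
    define C' where "C' m = (if m < N then C m else c)" for m
    have "\<forall>k l. B (a k) (a l) = (\<Sum>m<Suc N. cnj (C' m k) * C' m l)"
      using dec IH by (simp add: C'_def)
    then show ?thesis by blast
  qed
qed


lemma swap5: "(\<Sum>a\<in>A. \<Sum>b\<in>B'. \<Sum>c\<in>C. \<Sum>d\<in>D. \<Sum>m\<in>M. f a b c d m) =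
  (\<Sum>m\<in>M. \<Sum>a\<in>A. \<Sum>c\<in>C. \<Sum>b\<in>B'. \<Sum>d\<in>D. (f a b c d m :: complex))"
proof -
  have 1: "\<And>a b c. (\<Sum>d\<in>D. \<Sum>m\<in>M. f a b c d m) = (\<Sum>m\<in>M. \<Sum>d\<in>D. f a b c d m)" by (rule sum.swap)
  have 2: "\<And>a b. (\<Sum>c\<in>C. \<Sum>m\<in>M. \<Sum>d\<in>D. f a b c d m) = (\<Sum>m\<in>M. \<Sum>c\<in>C. \<Sum>d\<in>D. f a b c d m)" by (rule sum.swap)
  have 3: "\<And>a. (\<Sum>b\<in>B'. \<Sum>m\<in>M. \<Sum>c\<in>C. \<Sum>d\<in>D. f a b c d m) = (\<Sum>m\<in>M. \<Sum>b\<in>B'. \<Sum>c\<in>C. \<Sum>d\<in>D. f a b c d m)" by (rule sum.swap)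
  have 4: "(\<Sum>a\<in>A. \<Sum>m\<in>M. \<Sum>b\<in>B'. \<Sum>c\<in>C. \<Sum>d\<in>D. f a b c d m) = (\<Sum>m\<in>M. \<Sum>a\<in>A. \<Sum>b\<in>B'. \<Sum>c\<in>C. \<Sum>d\<in>D. f a b c d m)" by (rule sum.swap)
  have 5: "\<And>a m. (\<Sum>b\<in>B'. \<Sum>c\<in>C. \<Sum>d\<in>D. f a b c d m) = (\<Sum>c\<in>C. \<Sum>b\<in>B'. \<Sum>d\<in>D. f a b c d m)" by (rule sum.swap)
  have "(\<Sum>a\<in>A. \<Sum>b\<in>B'. \<Sum>c\<in>C. \<Sum>d\<in>D. \<Sum>m\<in>M. f a b c d m) =
     (\<Sum>a\<in>A. \<Sum>b\<in>B'. \<Sum>c\<in>C. \<Sum>m\<in>M. \<Sum>d\<in>D. f a b c d m)" by (simp only: 1)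
  also have "\<dots> = (\<Sum>a\<in>A. \<Sum>b\<in>B'. \<Sum>m\<in>M. \<Sum>c\<in>C. \<Sum>d\<in>D. f a b c d m)" by (simp only: 2)
  also have "\<dots> = (\<Sum>a\<in>A. \<Sum>m\<in>M. \<Sum>b\<in>B'. \<Sum>c\<in>C. \<Sum>d\<in>D. f a b c d m)" by (simp only: 3)
  also have "\<dots> = (\<Sum>m\<in>M. \<Sum>a\<in>A. \<Sum>b\<in>B'. \<Sum>c\<in>C. \<Sum>d\<in>D. f a b c d m)" by (rule 4)
  also have "\<dots> = (\<Sum>m\<in>M. \<Sum>a\<in>A. \<Sum>c\<in>C. \<Sum>b\<in>B'. \<Sum>d\<in>D. f a b c d m)" by (simp only: 5)
  finally show ?thesis .
qed

lemma swap3: "(\<Sum>b\<in>B'. \<Sum>d\<in>D. \<Sum>m\<in>M. f b d m) = (\<Sum>m\<in>M. \<Sum>b\<in>B'. \<Sum>d\<in>D. (f b d m :: complex))"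
proof -
  have 1: "\<And>b. (\<Sum>d\<in>D. \<Sum>m\<in>M. f b d m) = (\<Sum>m\<in>M. \<Sum>d\<in>D. f b d m)" by (rule sum.swap)
  have 2: "(\<Sum>b\<in>B'. \<Sum>m\<in>M. \<Sum>d\<in>D. f b d m) = (\<Sum>m\<in>M. \<Sum>b\<in>B'. \<Sum>d\<in>D. f b d m)" by (rule sum.swap)
  have "(\<Sum>b\<in>B'. \<Sum>d\<in>D. \<Sum>m\<in>M. f b d m) = (\<Sum>b\<in>B'. \<Sum>m\<in>M. \<Sum>d\<in>D. f b d m)" by (simp only: 1)
  also have "\<dots> = (\<Sum>m\<in>M. \<Sum>b\<in>B'. \<Sum>d\<in>D. f b d m)" by (rule 2)
  finally show ?thesis .
qed

lemma clin_fun_B: "clin_fun (B u)"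
  unfolding B_def[abs_def] by (rule clin_fun_phiw)

lemma QF: "B u v = (\<Sum>a\<in>UNIV. \<Sum>c\<in>UNIV. cnj (u a) * v c * B (bvec a) (bvec c))"
proof -
  have 1: "B u v = (\<Sum>c\<in>UNIV. v c * B u (bvec c))" by (rule clin_fun_expand[OF clin_fun_B])
  have 2: "B u (bvec c) = (\<Sum>a\<in>UNIV. cnj (u a) * B (bvec a) (bvec c))" for c
  proof -
    have "B (bvec c) u = (\<Sum>a\<in>UNIV. u a * B (bvec c) (bvec a))" by (rule clin_fun_expand[OF clin_fun_B])
    then have "cnj (B (bvec c) u) = (\<Sum>a\<in>UNIV. cnj (u a) * cnj (B (bvec c) (bvec a)))" by simp
    then show ?thesis by (simp add: B_herm[of u "bvec c"] B_herm[of "bvec a" "bvec c" for a])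
  qed
  show ?thesis unfolding 1 2
    unfolding sum_distrib_left by (subst sum.swap) (simp add: mult_ac)
qed

lemma clin_fun_sumB2:
  fixes c :: "'a::finite \<Rightarrow> 'b::finite \<Rightarrow> complex"
  assumes F: "clin_fun F"
  shows "F (\<lambda>p. \<Sum>i\<in>UNIV. \<Sum>k\<in>UNIV. c i k * T i k p) = (\<Sum>i\<in>UNIV. \<Sum>k\<in>UNIV. c i k * F (T i k))"
proof -
  have "F (\<lambda>p. \<Sum>i\<in>UNIV. \<Sum>k\<in>UNIV. c i k * T i k p) = F (\<lambda>p. \<Sum>i\<in>UNIV. 1 * (\<lambda>p. \<Sum>k\<in>UNIV. c i k * T i k p) p)"
    by simp
  also have "\<dots> = (\<Sum>i\<in>UNIV. 1 * F (\<lambda>p. \<Sum>k\<in>UNIV. c i k * T i k p))"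
    by (rule clin_fun_sumB[OF F]) simp
  also have "\<dots> = (\<Sum>i\<in>UNIV. \<Sum>k\<in>UNIV. c i k * F (T i k))"
  proof -
    have "\<And>i. F (\<lambda>p. \<Sum>k\<in>UNIV. c i k * T i k p) = (\<Sum>k\<in>UNIV. c i k * F (T i k))"
      by (rule clin_fun_sumB[OF F]) simp
    then show ?thesis by simp
  qed
  finally show ?thesis .
qed

lemma ts_expand: "tstar st st Y = (\<lambda>p. \<Sum>i\<in>UNIV. \<Sum>k\<in>UNIV. cnj (Y (i, k)) * tens (st (bvec i)) (st (bvec k)) p)"
  by (auto simp: tstar_def tens_def mult.assoc)

lemma Y_expand:
  fixes Y :: "'a::finite \<times> 'b::finite \<Rightarrow> complex"
  shows "Y = (\<lambda>p. \<Sum>c\<in>UNIV. \<Sum>d\<in>UNIV. Y (c, d) * tens (bvec c) (bvec d) p)"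
proof (rule ext, clarify)
  fix a :: 'a and b :: 'b
  show "Y (a, b) = (\<Sum>c\<in>UNIV. \<Sum>d\<in>UNIV. Y (c, d) * tens (bvec c) (bvec d) (a, b))"
    by (simp add: mult.assoc[symmetric])
qed

lemma Phi2_quad: "Phi2 (tm (tstar st st Y) Y) =
   (\<Sum>i\<in>UNIV. \<Sum>k\<in>UNIV. \<Sum>c\<in>UNIV. \<Sum>d\<in>UNIV. cnj (Y (i, k)) * (Y (c, d) * (B (bvec i) (bvec c) * B (bvec k) (bvec d))))"
proof -
  have inner: "Phi2 (tm (tens (st (bvec i)) (st (bvec k))) Y) = (\<Sum>c\<in>UNIV. \<Sum>d\<in>UNIV. Y (c, d) * (B (bvec i) (bvec c) * B (bvec k) (bvec d)))" for i k
  proof -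
    have "Phi2 (tm (tens (st (bvec i)) (st (bvec k))) Y) = Phi2 (tm (tens (st (bvec i)) (st (bvec k))) (\<lambda>p. \<Sum>c\<in>UNIV. \<Sum>d\<in>UNIV. Y (c, d) * tens (bvec c) (bvec d) p))"
      by (subst Y_expand) (rule refl)
    also have "\<dots> = (\<Sum>c\<in>UNIV. \<Sum>d\<in>UNIV. Y (c, d) * Phi2 (tm (tens (st (bvec i)) (st (bvec k))) (tens (bvec c) (bvec d))))"
      by (rule clin_fun_sumB2[OF clin_fun_comp[OF clin_fun_Phi2 clin_tm2]])
    finally show ?thesis by (simp add: tm_tens Phi2_tens B_def)
  qed
  have "Phi2 (tm (tstar st st Y) Y) = (\<Sum>i\<in>UNIV. \<Sum>k\<in>UNIV. cnj (Y (i, k)) * Phi2 (tm (tens (st (bvec i)) (st (bvec k))) Y))"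
    unfolding ts_expand by (rule clin_fun_sumB2[OF clin_fun_comp[OF clin_fun_Phi2 clin_tm1]])
  also have "\<dots> = (\<Sum>i\<in>UNIV. \<Sum>k\<in>UNIV. cnj (Y (i, k)) * (\<Sum>c\<in>UNIV. \<Sum>d\<in>UNIV. Y (c, d) * (B (bvec i) (bvec c) * B (bvec k) (bvec d))))"
    by (simp only: inner)
  finally show ?thesis by (simp add: sum_distrib_left)
qed

lemma Phi2_sos: "\<exists>(N::nat) u. Phi2 (tm (tstar st st Y) Y) = (\<Sum>m<N. B (u m) (u m)) \<and>
    ((\<forall>m<N. u m = vzero) \<longrightarrow> Y = (\<lambda>_. 0))"
proof -
  have cm: "card {k. (bvec :: 'i \<Rightarrow> 'i \<Rightarrow> complex) k \<noteq> vzero} \<le> card (UNIV :: 'i set)"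
    by (rule card_mono) auto
  obtain N :: nat and C where Hd0: "\<forall>b d. B (bvec b) (bvec d) = (\<Sum>m<N. cnj (C m b) * C m d)"
    using chol[OF cm] by blast
  have Hd: "\<And>b d. B (bvec b) (bvec d) = (\<Sum>m<N. cnj (C m b) * C m d)" using Hd0 by blast
  define u where "u m = (\<lambda>a. \<Sum>b\<in>UNIV. C m b * Y (a, b))" for m
  have L: "Phi2 (tm (tstar st st Y) Y) = (\<Sum>a\<in>UNIV. \<Sum>b\<in>UNIV. \<Sum>c\<in>UNIV. \<Sum>d\<in>UNIV. \<Sum>m<N.
      cnj (Y (a, b)) * (Y (c, d) * (B (bvec a) (bvec c) * (cnj (C m b) * C m d))))"
    by (simp add: Phi2_quad Hd sum_distrib_left)
  have R: "(\<Sum>m<N. B (u m) (u m)) = (\<Sum>m<N. \<Sum>a\<in>UNIV. \<Sum>c\<in>UNIV. \<Sum>b\<in>UNIV. \<Sum>d\<in>UNIV.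
      cnj (Y (a, b)) * (Y (c, d) * (B (bvec a) (bvec c) * (cnj (C m b) * C m d))))"
  proof -
    have "(\<Sum>m<N. B (u m) (u m)) = (\<Sum>m<N. \<Sum>a\<in>UNIV. \<Sum>c\<in>UNIV. cnj (u m a) * u m c * B (bvec a) (bvec c))"
      by (rule sum.cong[OF refl], rule QF)
    then show ?thesis by (simp add: u_def sum_distrib_left sum_distrib_right mult_ac)
  qed
  have eq: "Phi2 (tm (tstar st st Y) Y) = (\<Sum>m<N. B (u m) (u m))"
    unfolding L R by (rule swap5)
  have fa: "Y = (\<lambda>_. 0)" if z: "\<forall>m<N. u m = vzero"
  proof (rule ext, clarify)
    fix a b
    define v where "v = (\<lambda>b. Y (a, b))"
    have "B v v = (\<Sum>b\<in>UNIV. \<Sum>d\<in>UNIV. \<Sum>m<N. cnj (v b) * v d * (cnj (C m b) * C m d))"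
      by (simp add: QF[of v v] Hd sum_distrib_left)
    also have "\<dots> = (\<Sum>m<N. \<Sum>b\<in>UNIV. \<Sum>d\<in>UNIV. cnj (v b) * v d * (cnj (C m b) * C m d))"
      by (rule swap3)
    also have "\<dots> = (\<Sum>m<N. cnj (u m a) * u m a)"
      by (simp add: u_def v_def sum_distrib_left sum_distrib_right mult_ac)
    also have "\<dots> = 0" using z by (simp add: vzero_def)
    finally have "v = vzero" by (rule B_faithful)
    then show "Y (a, b) = 0" by (simp add: v_def vzero_def fun_eq_iff)
  qed
  show ?thesis using eq fa by blast
qed

lemma Phi2_pos: "Im (Phi2 (tm (tstar st st Y) Y)) = 0" "Re (Phi2 (tm (tstar st st Y) Y)) \<ge> 0"
proof -
  obtain N :: nat and u where eq: "Phi2 (tm (tstar st st Y) Y) = (\<Sum>m<N. B (u m) (u m))"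
    using Phi2_sos by blast
  show "Im (Phi2 (tm (tstar st st Y) Y)) = 0" by (simp add: eq B_pos)
  show "Re (Phi2 (tm (tstar st st Y) Y)) \<ge> 0" by (simp add: eq B_pos sum_nonneg)
qed

lemma Phi2_faithful: "Phi2 (tm (tstar st st Y) Y) = 0 \<Longrightarrow> Y = (\<lambda>_. 0)"
proof -
  assume z: "Phi2 (tm (tstar st st Y) Y) = 0"
  obtain N :: nat and u where eq: "Phi2 (tm (tstar st st Y) Y) = (\<Sum>m<N. B (u m) (u m))"
    and fa: "(\<forall>m<N. u m = vzero) \<longrightarrow> Y = (\<lambda>_. 0)"
    using Phi2_sos by blast
  have "(\<Sum>m<N. Re (B (u m) (u m))) = 0" using z eq by (metis Re_sum zero_complex.sel(1))
  then have "\<forall>m\<in>{..<N}. Re (B (u m) (u m)) = 0"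
    by (subst (asm) sum_nonneg_eq_0_iff) (auto simp: B_pos)
  then have "\<forall>m<N. u m = vzero"
    using B_pos B_faithful by (metis complex_eqI lessThan_iff zero_complex.sel)
  then show ?thesis using fa by blast
qed

end


lemma clin_inj_surj:
  fixes T :: "('i::finite \<Rightarrow> complex) \<Rightarrow> ('i \<Rightarrow> complex)"
  assumes T: "clin T" and i: "inj T" shows "surj T"
proof -
  define f where "f v = vec_lambda (T (vec_nth v))" for v :: "complex^'i"
  have lin: "linear f"
  proof (rule linearI)
    fix x y :: "complex^'i"
    have "vec_nth (x + y) = vadd (vec_nth x) (vec_nth y)" by (auto simp: vadd_def)
    then have "f (x + y) = vec_lambda (vadd (T (vec_nth x)) (T (vec_nth y)))"
      by (simp only: f_def clin_add[OF T])
    then show "f (x + y) = f x + f y"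
      by (simp add: f_def vec_eq_iff vadd_def)
  next
    fix r :: real and x :: "complex^'i"
    have h: "vec_nth (r *\<^sub>R x) = vscale (of_real r) (vec_nth x)"
      unfolding vscale_def by (rule ext, subst vector_scaleR_component, simp add: scaleR_conv_of_real)
    have "f (r *\<^sub>R x) = vec_lambda (vscale (of_real r) (T (vec_nth x)))"
      by (simp only: f_def h clin_scale[OF T])
    then show "f (r *\<^sub>R x) = r *\<^sub>R f x"
      by (simp add: vec_eq_iff vscale_def f_def) (simp add: scaleR_conv_of_real)
  qed
  have "inj f"
  proof (rule injI)
    fix x y assume "f x = f y"
    then have "T (vec_nth x) = T (vec_nth y)" by (simp add: f_def vec_eq_iff fun_eq_iff)
    then have "vec_nth x = vec_nth y" using i by (simp add: inj_eq)
    then show "x = y" by (simp add: vec_eq_iff)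
  qed
  then have sf: "surj f" using lin by (simp add: linear_inj_imp_surj)
  show ?thesis
  proof (rule surjI)
    fix y :: "'i \<Rightarrow> complex"
    obtain x where "f x = vec_lambda y" using sf by (metis surjD)
    then have "T (vec_nth x) = y" by (simp add: f_def vec_eq_iff fun_eq_iff)
    then show "T (inv T y) = y" by (metis f_inv_into_f rangeI)
  qed
qed

context gka begin

lemma slice_st: "st (slice phi X) = slice phi (tstar st st X)"
proof
  fix j
  have eq: "\<And>k. cnj (phi (bvec k)) = (\<Sum>l\<in>UNIV. st (bvec k) l * phi (bvec l))"
    using clin_fun_expand[OF clin_fun_phi] phi_herm by metis
  have "st (slice phi X) j = (\<Sum>i\<in>UNIV. cnj (slice phi X i) * st (bvec i) j)"
    by (rule antilin_expand[OF antilin_st])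
  also have "\<dots> = (\<Sum>i\<in>UNIV. \<Sum>k\<in>UNIV. \<Sum>l\<in>UNIV. cnj (X (i, k)) * st (bvec i) j * (st (bvec k) l * phi (bvec l)))"
    by (simp add: slice_apply eq sum_distrib_left sum_distrib_right mult_ac)
  also have "\<dots> = (\<Sum>l\<in>UNIV. \<Sum>i\<in>UNIV. \<Sum>k\<in>UNIV. cnj (X (i, k)) * st (bvec i) j * (st (bvec k) l * phi (bvec l)))"
    by (rule swap3)
  also have "\<dots> = slice phi (tstar st st X) j"
    by (simp add: slice_apply tstar_def sum_distrib_left sum_distrib_right mult_ac)
  finally show "st (slice phi X) j = slice phi (tstar st st X) j" .
qed

lemma P_st: "tstar st st P = P"
proof -
  have "Delta (st one) = tstar st st P" by (rule Delta_st)
  then show ?thesis unfolding st_one by (rule sym)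
qed

lemma g_st: "st g = g"
proof -
  have "st g = st (slice phi P)" by (simp only: g_def2)
  also have "\<dots> = slice phi (tstar st st P)" by (rule slice_st)
  also have "\<dots> = slice phi P" by (simp only: P_st)
  finally show ?thesis by (simp only: g_def2)
qed

lemma Phi2_Delta_sq: "Phi2 (tm (tstar st st (Delta z)) (Delta z)) = phi (mul g (mul (st z) z))"
  by (simp add: C2 Delta_mul Delta_st)

lemma g_inj: assumes "mul g z = vzero" shows "z = vzero"
proof -
  have "mul g (mul (st z) z) = mul (mul g (st z)) z" by (simp add: mul_assoc)
  also have "\<dots> = mul (mul (st z) g) z" using C3 by (simp add: central_def)
  also have "\<dots> = mul (st z) (mul g z)" by (simp add: mul_assoc)
  finally have "mul g (mul (st z) z) = mul (st z) (mul g z)" .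
  then have "Phi2 (tm (tstar st st (Delta z)) (Delta z)) = 0" using assms by (simp add: Phi2_Delta_sq)
  then have "Delta z = (\<lambda>_. 0)" by (rule Phi2_faithful)
  then have "Delta z = Delta vzero" using Delta_zero by simp
  then show ?thesis using inj_Delta by (simp add: inj_eq)
qed

lemma exists_w: "\<exists>w. mul g w = one"
proof -
  have "inj (mul g)"
  proof (rule injI)
    fix x y assume "mul g x = mul g y"
    then have "mul g (vadd x (vscale (-1) y)) = vadd (mul g y) (vscale (-1) (mul g y))"
      by (simp add: mul_vadd2 mul_vscale2)
    also have "\<dots> = vzero" by (auto simp: vadd_def vscale_def vzero_def)
    finally have "mul g (vadd x (vscale (-1) y)) = vzero" .
    then have "vadd x (vscale (-1) y) = vzero" by (rule g_inj)
    then show "x = y" by (rule vsub_eq)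
  qed
  then have "surj (mul g)" by (rule clin_inj_surj[OF clin_mul2])
  then show ?thesis by (metis surjD)
qed

definition w where "w = (SOME w. mul g w = one)"

lemma gw: "mul g w = one" unfolding w_def using exists_w by (rule someI_ex)
lemma wg: "mul w g = one" using gw C3 by (simp add: central_def)

lemma w_central: "central w"
  unfolding central_def
proof
  fix x
  have "mul w x = mul w (mul x (mul g w))" by (simp add: gw)
  also have "\<dots> = mul w (mul (mul x g) w)" by (simp add: mul_assoc)
  also have "\<dots> = mul w (mul (mul g x) w)" using C3 by (simp add: central_def)
  also have "\<dots> = mul (mul (mul w g) x) w" by (simp add: mul_assoc)
  also have "\<dots> = mul x w" by (simp add: wg)
  finally show "mul w x = mul x w" .
qed

lemma S_w: "S w = w"
proof -
  have h: "mul (S w) g = one" using arg_cong[OF gw, of S] by (simp add: S_mul S_g)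
  have "S w = mul (S w) (mul g w)" by (simp add: gw)
  also have "\<dots> = mul (mul (S w) g) w" by (simp add: mul_assoc)
  finally show ?thesis by (simp add: h)
qed

lemma st_w: "st w = w"
proof -
  have h: "mul (st w) g = one" using arg_cong[OF gw, of st] by (simp add: st_mul g_st)
  have "st w = mul (st w) (mul g w)" by (simp add: gw)
  also have "\<dots> = mul (mul (st w) g) w" by (simp add: mul_assoc)
  finally show ?thesis by (simp add: h)
qed

lemma w_Delta1: "Delta w = tm P (tens one w)"
proof -
  have "tm P (tens one w) = tm (tm (Delta w) (Delta g)) (tens one w)" by (simp add: wg Delta_mul[symmetric])
  also have "\<dots> = tm (Delta w) (tm P (tm (tens one g) (tens one w)))" by (simp add: tm_assoc g_Delta1)
  also have "\<dots> = Delta w" by (simp add: tm_tens gw Delta_one_right)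
  finally show ?thesis by simp
qed

lemma w_Delta2: "Delta w = tm (tens w one) P"
  by (rule C14[OF S_w w_Delta1])

lemma slice_tmapF:
  assumes F: "clin F" and th: "clin_fun \<theta>"
  shows "slice \<theta> (tmap F id X) = F (slice \<theta> X)"
proof
  fix a
  have "slice \<theta> (tmap F id X) a = (\<Sum>l\<in>UNIV. (\<Sum>i\<in>UNIV. X (i, l) * F (bvec i) a) * \<theta> (bvec l))"
    by (simp add: slice_apply id_def tmap_id2)
  also have "\<dots> = (\<Sum>i\<in>UNIV. (\<Sum>l\<in>UNIV. X (i, l) * \<theta> (bvec l)) * F (bvec i) a)"
    unfolding sum_distrib_left sum_distrib_right by (subst sum.swap) (simp add: mult_ac)
  also have "\<dots> = F (slice \<theta> X) a" by (simp add: clin_expand[OF F, of "slice \<theta> X" a] slice_apply)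
  finally show "slice \<theta> (tmap F id X) a = F (slice \<theta> X) a" .
qed

lemma haar_exists: "normalized_haar_trace mul one st Delta S (\<lambda>x. phi (mul w x))"
proof -
  let ?psi = "\<lambda>x. phi (mul w x)"
  have wc: "\<And>x. mul w x = mul x w" using w_central by (simp add: central_def)
  have key: "phi (mul w (mul (st x) x)) = Phi2 (tm (tstar st st (Delta (mul x w))) (Delta (mul x w)))" for x
  proof -
    have "mul g (mul (st (mul x w)) (mul x w)) = mul g (mul (mul w (st x)) (mul x w))"
      by (simp add: st_mul st_w)
    also have "\<dots> = mul (mul g w) (mul (st x) (mul x w))" by (simp add: mul_assoc)
    also have "\<dots> = mul (mul (st x) x) w" by (simp add: gw mul_assoc)
    finally have "mul g (mul (st (mul x w)) (mul x w)) = mul (mul (st x) x) w" .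
    then have "Phi2 (tm (tstar st st (Delta (mul x w))) (Delta (mul x w))) = phi (mul (mul (st x) x) w)"
      by (simp add: Phi2_Delta_sq)
    also have "\<dots> = phi (mul w (mul (st x) x))" by (rule phi_trace)
    finally show ?thesis by simp
  qed
  have ft: "faithful_trace mul st ?psi"
    unfolding faithful_trace_def
  proof (intro conjI allI impI)
    show "clin_fun ?psi" by (rule clin_fun_phiw)
  next
    fix x y show "phi (mul w (mul x y)) = phi (mul w (mul y x))"
    proof -
      have "phi (mul w (mul x y)) = phi (mul (mul w x) y)" by (simp add: mul_assoc)
      also have "\<dots> = phi (mul y (mul w x))" by (rule phi_trace)
      also have "\<dots> = phi (mul (mul y w) x)" by (simp add: mul_assoc)
      also have "\<dots> = phi (mul w (mul y x))" by (subst wc[of y, symmetric]) (simp add: mul_assoc)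
      finally show ?thesis .
    qed
  next
    fix x
    show "Im (phi (mul w (mul (st x) x))) = 0" using Phi2_pos(1) key by simp
    show "Re (phi (mul w (mul (st x) x))) \<ge> 0" using Phi2_pos(2) key by simp
  next
    fix x assume "phi (mul w (mul (st x) x)) = 0"
    then have "Phi2 (tm (tstar st st (Delta (mul x w))) (Delta (mul x w))) = 0"
      using key[of x] by simp
    then have "Delta (mul x w) = (\<lambda>_. 0)" by (rule Phi2_faithful)
    then have "Delta (mul x w) = Delta vzero" using Delta_zero by simp
    then have "mul x w = vzero" using inj_Delta by (simp add: inj_eq)
    then have "mul (mul x w) g = vzero" by simp
    then show "x = vzero" by (simp add: mul_assoc wg)
  qed
  have inv: "slice ?psi (Delta x) = slice ?psi (tmap (eps_t mul Delta S) id (Delta x))" for x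
  proof -
    have "slice ?psi (Delta x) = slice phi (tm (tens one w) (Delta x))" by (rule K4[symmetric])
    also have "\<dots> = slice phi (tm (tens one w) (tm P (Delta x)))" by (simp add: Delta_one_left)
    also have "\<dots> = slice phi (tm (tm (tens one w) P) (Delta x))" by (simp only: tm_assoc)
    also have "tm (tens one w) P = Delta w" using central_tens_comm[OF w_central, of P] w_Delta1 by simp
    also have "slice phi (tm (Delta w) (Delta x)) = E (mul w x)" by (simp add: Delta_mul E_def)
    finally have e: "slice ?psi (Delta x) = E (mul w x)" .
    show ?thesis by (simp add: slice_tmapF[OF clin_eps clin_fun_phiw] e C11)
  qed
  have sinv: "?psi (S x) = ?psi x" for x
  proof -
    have "S (mul x w) = mul w (S x)" by (simp add: S_mul S_w)
    then have "phi (mul w (S x)) = phi (mul x w)" by (metis phi_S)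
    then show ?thesis by (simp add: wc)
  qed
  have norm: "slice ?psi P = one"
  proof -
    have "slice ?psi P = slice phi (tm (tens one w) P)" by (rule K4[symmetric])
    also have "\<dots> = slice phi (Delta w)" by (simp add: central_tens_comm[OF w_central] w_Delta1)
    also have "\<dots> = mul w g" by (simp add: w_Delta2 K2 g_def2)
    finally show ?thesis by (simp add: wg)
  qed
  show ?thesis unfolding normalized_haar_trace_def using ft inv sinv norm by blast
qed


lemma haar_unique:
  assumes h: "normalized_haar_trace mul one st Delta S psi'"
  shows "psi' = (\<lambda>x. phi (mul w x))"
proof -
  have ft: "faithful_trace mul st psi'"
    and inv': "\<And>x. slice psi' (Delta x) = slice psi' (tmap (eps_t mul Delta S) id (Delta x))"
    and sinv: "\<And>x. psi' (S x) = psi' x" and norm: "slice psi' P = one"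
    using h unfolding normalized_haar_trace_def by blast+
  have lin: "clin_fun psi'" and tr: "\<And>x y. psi' (mul x y) = psi' (mul y x)"
    using ft unfolding faithful_trace_def by blast+
  define R where "R a = (\<lambda>i. phi (mul a (bvec i)))" for a
  have clinR: "clin R"
  proof (rule clinI)
    fix x y show "R (vadd x y) = vadd (R x) (R y)"
      by (simp add: R_def mul_vadd1 phi_vadd) (simp add: vadd_def)
  next
    fix c x show "R (vscale c x) = vscale c (R x)"
      by (simp add: R_def mul_vscale1 phi_vscale) (simp add: vscale_def)
  qed
  have injR: "inj R"
  proof (rule injI)
    fix a b assume "R a = R b"
    then have bi: "\<And>i. phi (mul a (bvec i)) = phi (mul b (bvec i))" by (simp add: R_def fun_eq_iff)
    have "\<And>y. phi (mul a y) = phi (mul b y)"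
      by (rule clin_fun_ext[OF clin_fun_phiw clin_fun_phiw]) (rule bi)
    then show "a = b" by (rule ND_eq)
  qed
  obtain w' where Rw: "R w' = (\<lambda>i. psi' (bvec i))"
    using clin_inj_surj[OF clinR injR] by (metis surjD)
  have pw: "psi' x = phi (mul w' x)" for x
  proof (rule clin_fun_ext[OF lin clin_fun_phiw])
    fix i show "psi' (bvec i) = phi (mul w' (bvec i))" using fun_cong[OF Rw, of i] by (simp add: R_def)
  qed
  have pw': "psi' = (\<lambda>x. phi (mul w' x))" using pw by (rule ext)
  have cw: "central w'"
    unfolding central_def
  proof
    fix x show "mul w' x = mul x w'"
    proof (rule ND_eq)
      fix y
      have "phi (mul (mul w' x) y) = psi' (mul x y)" by (simp add: pw mul_assoc)
      also have "\<dots> = psi' (mul y x)" by (rule tr)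
      also have "\<dots> = phi (mul (mul w' y) x)" by (simp add: pw mul_assoc)
      also have "\<dots> = phi (mul x (mul w' y))" by (rule phi_trace)
      also have "\<dots> = phi (mul (mul x w') y)" by (simp add: mul_assoc)
      finally show "phi (mul (mul w' x) y) = phi (mul (mul x w') y)" .
    qed
  qed
  have Sw: "S w' = w'"
  proof (rule ND_eq)
    fix y
    have "phi (mul w' y) = phi (mul w' (S y))" using sinv[of y] by (simp add: pw)
    also have "\<dots> = phi (S (mul y (S w')))" by (simp add: S_mul)
    also have "\<dots> = phi (mul y (S w'))" by simp
    also have "\<dots> = phi (mul (S w') y)" by (rule phi_trace)
    finally show "phi (mul (S w') y) = phi (mul w' y)" by simp
  qed
  have hi: "slice phi (tm (tens one w') (Delta x)) = E (mul x w')" for x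
  proof -
    have "slice phi (tm (tens one w') (Delta x)) = slice psi' (Delta x)" by (simp add: K4 pw')
    also have "\<dots> = eps_t mul Delta S (slice psi' (Delta x))"
      using inv'[of x] by (simp add: slice_tmapF[OF clin_eps lin])
    also have "\<dots> = eps_t mul Delta S (slice phi (tm (tens one w') (Delta x)))" by (simp add: K4 pw')
    also have "\<dots> = E (mul x w')" by (rule Inv)
    finally show ?thesis .
  qed
  have d1: "Delta w' = tm P (tens one w')" by (rule C13[OF cw hi])
  have d2: "Delta w' = tm (tens w' one) P" by (rule C14[OF Sw d1])
  have "one = slice psi' P" using norm by simp
  also have "\<dots> = slice phi (tm (tens one w') P)" by (simp add: K4 pw')
  also have "\<dots> = slice phi (Delta w')" by (simp add: central_tens_comm[OF cw] d1)
  also have "\<dots> = mul w' g" by (simp add: d2 K2 g_def2)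
  finally have w'g: "mul w' g = one" by simp
  have "w' = mul w' (mul g w)" by (simp add: gw)
  also have "\<dots> = mul (mul w' g) w" by (simp add: mul_assoc)
  also have "\<dots> = w" by (simp add: w'g)
  finally show ?thesis using pw' by simp
qed

lemma haar_ex1: "\<exists>!psi. normalized_haar_trace mul one st Delta S psi"
  using haar_exists haar_unique by blast

end

theorem corollary2p5p2:
  fixes mul :: "('i::finite \<Rightarrow> complex) \<Rightarrow> ('i \<Rightarrow> complex) \<Rightarrow> ('i \<Rightarrow> complex)"
    and one :: "'i \<Rightarrow> complex"
    and st :: "('i \<Rightarrow> complex) \<Rightarrow> ('i \<Rightarrow> complex)"
    and Delta :: "('i \<Rightarrow> complex) \<Rightarrow> ('i \<times> 'i \<Rightarrow> complex)"
    and S :: "('i \<Rightarrow> complex) \<Rightarrow> ('i \<Rightarrow> complex)"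
    and phi :: "('i \<Rightarrow> complex) \<Rightarrow> complex"
  assumes "gen_kac_algebra mul one st Delta S phi"
  shows "\<exists>!psi. normalized_haar_trace mul one st Delta S psi"
proof -
  interpret gka mul one st Delta S phi by (rule gka.intro) (rule assms)
  show ?thesis by (rule haar_ex1)
qed


end
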